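(* Let $(S_i,\mathscr T_i)_{i\in I}$ be a non-empty family of stable topological spaces, and equip $\prod_{i\in I}S_i$ with the stable product topology. Then $\prod_{i\in I}S_i$ is stable compact if and only if $S_i$ is stable compact for every $i\in I$.
   Context: $L^0$ is the ring of real measurable functions on a probability space modulo a.e. equality. An $L^0$-module $E$ is stable if for every countable measurable partition $(A_k)$ of $\Omega$ and $(x_k)\subset E$ there is a unique $x=\sum_k1_{A_k}x_k$ with $1_{A_k}x=1_{A_k}x_k$. A nonempty subset is stable if closed under such concatenations; for stable sets $Y_k$, $\sum_k1_{A_k}Y_k=\{\sum_k1_{A_k}y_k:y_k\in Y_k\}$, and a nonempty collection of stable sets is stable if closed under this operation. A stable topological space is a stable subset $S$ of a stable $L^0$-module with a topology having a base which is a stable collection of stable sets. A filter is stable if it has a filter base which is a stable collection of stable sets; $S$ is stable compact if every stable filter on $S$ has a cluster point in $S$. If $S_i\subset E_i$, then $\prod_iS_i$ is a stable subset of the product module $\prod_iE_i$ (concatenation coordinatewise). If $\mathscr B_i$ is a base of $\mathscr T_i$ which is a stable collection of stable sets, the stable product topology on $\prod_iS_i$ is the topology with base consisting of all sets $\sum_k1_{A_k}\prod_iU^k_i$, where $(A_k)$ is a countable measurable partition and for each $k$, $U^k_i\in\mathscr B_i$ for finitely many $i$ and $U^k_i=S_i$ for all other $i$. *)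

theory Defs
  imports "HOL-Probability.Probability"
begin

text \<open>Elements of L0 are represented by
Borel measurable functions; an L0-module is a module over the ring of measurable
functions on which a.e.-equal functions act identically (so it is exactly a module
over L0 = measurable functions modulo a.e. equality).\<close>

record ('w, 'e) L0module =
  mcarr :: "'e set"
  madd  :: "'e \<Rightarrow> 'e \<Rightarrow> 'e"
  mzero :: "'e"
  msmul :: "('w \<Rightarrow> real) \<Rightarrow> 'e \<Rightarrow> 'e"

definition L0_module :: "'w measure \<Rightarrow> ('w, 'e) L0module \<Rightarrow> bool" where
  "L0_module M E \<longleftrightarrow>
     mzero E \<in> mcarr E \<and>
     (\<forall>x\<in>mcarr E. \<forall>y\<in>mcarr E. madd E x y \<in> mcarr E) \<and>
     (\<forall>x\<in>mcarr E. \<forall>y\<in>mcarr E. \<forall>z\<in>mcarr E. madd E (madd E x y) z = madd E x (madd E y z)) \<and>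
     (\<forall>x\<in>mcarr E. \<forall>y\<in>mcarr E. madd E x y = madd E y x) \<and>
     (\<forall>x\<in>mcarr E. madd E (mzero E) x = x) \<and>
     (\<forall>x\<in>mcarr E. \<exists>y\<in>mcarr E. madd E x y = mzero E) \<and>
     (\<forall>f\<in>borel_measurable M. \<forall>x\<in>mcarr E. msmul E f x \<in> mcarr E) \<and>
     (\<forall>f\<in>borel_measurable M. \<forall>g\<in>borel_measurable M. \<forall>x\<in>mcarr E.
        msmul E (\<lambda>w. f w * g w) x = msmul E f (msmul E g x)) \<and>
     (\<forall>f\<in>borel_measurable M. \<forall>g\<in>borel_measurable M. \<forall>x\<in>mcarr E.
        msmul E (\<lambda>w. f w + g w) x = madd E (msmul E f x) (msmul E g x)) \<and>
     (\<forall>f\<in>borel_measurable M. \<forall>x\<in>mcarr E. \<forall>y\<in>mcarr E.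
        msmul E f (madd E x y) = madd E (msmul E f x) (msmul E f y)) \<and>
     (\<forall>x\<in>mcarr E. msmul E (\<lambda>w. 1) x = x) \<and>
     (\<forall>f\<in>borel_measurable M. \<forall>g\<in>borel_measurable M. \<forall>x\<in>mcarr E.
        (AE w in M. f w = g w) \<longrightarrow> msmul E f x = msmul E g x)"

text \<open>Countable measurable partitions of the sample space (finite ones via empty sets).\<close>
definition meas_partition :: "'w measure \<Rightarrow> (nat \<Rightarrow> 'w set) \<Rightarrow> bool" where
  "meas_partition M A \<longleftrightarrow> (\<forall>k. A k \<in> sets M) \<and> disjoint_family A \<and> (\<Union>k. A k) = space M"

definition stable_module :: "'w measure \<Rightarrow> ('w, 'e) L0module \<Rightarrow> bool" where
  "stable_module M E \<longleftrightarrow> L0_module M E \<and>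
     (\<forall>A x. meas_partition M A \<and> (\<forall>k. x k \<in> mcarr E) \<longrightarrow>
        (\<exists>!y. y \<in> mcarr E \<and>
           (\<forall>k. msmul E (indicator (A k)) y = msmul E (indicator (A k)) (x k))))"

text \<open>The concatenation \<Sum>k 1_{A_k} x_k.\<close>
definition concat :: "'w measure \<Rightarrow> ('w, 'e) L0module \<Rightarrow> (nat \<Rightarrow> 'w set) \<Rightarrow> (nat \<Rightarrow> 'e) \<Rightarrow> 'e" where
  "concat M E A x = (THE y. y \<in> mcarr E \<and>
       (\<forall>k. msmul E (indicator (A k)) y = msmul E (indicator (A k)) (x k)))"

definition stable_set :: "'w measure \<Rightarrow> ('w, 'e) L0module \<Rightarrow> 'e set \<Rightarrow> bool" where
  "stable_set M E S \<longleftrightarrow> S \<noteq> {} \<and> S \<subseteq> mcarr E \<and>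
     (\<forall>A x. meas_partition M A \<and> (\<forall>k. x k \<in> S) \<longrightarrow> concat M E A x \<in> S)"

definition concat_sets :: "'w measure \<Rightarrow> ('w, 'e) L0module \<Rightarrow> (nat \<Rightarrow> 'w set) \<Rightarrow> (nat \<Rightarrow> 'e set) \<Rightarrow> 'e set" where
  "concat_sets M E A Y = {concat M E A y | y. \<forall>k. y k \<in> Y k}"

definition stable_collection :: "'w measure \<Rightarrow> ('w, 'e) L0module \<Rightarrow> 'e set set \<Rightarrow> bool" where
  "stable_collection M E \<C> \<longleftrightarrow> \<C> \<noteq> {} \<and> (\<forall>Y\<in>\<C>. stable_set M E Y) \<and>
     (\<forall>A Y. meas_partition M A \<and> (\<forall>k. Y k \<in> \<C>) \<longrightarrow> concat_sets M E A Y \<in> \<C>)"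

definition stable_base :: "'w measure \<Rightarrow> ('w, 'e) L0module \<Rightarrow> 'e topology \<Rightarrow> 'e set set \<Rightarrow> bool" where
  "stable_base M E T B \<longleftrightarrow> (\<forall>U\<in>B. openin T U) \<and>
     (\<forall>U. openin T U \<longrightarrow> (\<exists>\<U>\<subseteq>B. \<Union>\<U> = U)) \<and> stable_collection M E B"

definition stable_top_space :: "'w measure \<Rightarrow> ('w, 'e) L0module \<Rightarrow> 'e set \<Rightarrow> 'e topology \<Rightarrow> bool" where
  "stable_top_space M E S T \<longleftrightarrow> stable_set M E S \<and> topspace T = S \<and> (\<exists>B. stable_base M E T B)"

definition filter_on :: "'e set \<Rightarrow> 'e set set \<Rightarrow> bool" where
  "filter_on S \<F> \<longleftrightarrow> \<F> \<noteq> {} \<and> {} \<notin> \<F> \<and> (\<forall>F\<in>\<F>. F \<subseteq> S) \<and>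
     (\<forall>F\<in>\<F>. \<forall>G\<in>\<F>. F \<inter> G \<in> \<F>) \<and> (\<forall>F\<in>\<F>. \<forall>G. F \<subseteq> G \<and> G \<subseteq> S \<longrightarrow> G \<in> \<F>)"

definition stable_filter :: "'w measure \<Rightarrow> ('w, 'e) L0module \<Rightarrow> 'e set \<Rightarrow> 'e set set \<Rightarrow> bool" where
  "stable_filter M E S \<F> \<longleftrightarrow> filter_on S \<F> \<and>
     (\<exists>\<B>. \<B> \<subseteq> \<F> \<and> (\<forall>F\<in>\<F>. \<exists>B\<in>\<B>. B \<subseteq> F) \<and> stable_collection M E \<B>)"

definition cluster_point :: "('e set \<Rightarrow> bool) \<Rightarrow> 'e set set \<Rightarrow> 'e \<Rightarrow> bool" where
  "cluster_point opn \<F> x \<longleftrightarrow> (\<forall>U. opn U \<and> x \<in> U \<longrightarrow> (\<forall>F\<in>\<F>. U \<inter> F \<noteq> {}))"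

definition stable_compact :: "'w measure \<Rightarrow> ('w, 'e) L0module \<Rightarrow> 'e set \<Rightarrow> ('e set \<Rightarrow> bool) \<Rightarrow> bool" where
  "stable_compact M E S opn \<longleftrightarrow>
     (\<forall>\<F>. stable_filter M E S \<F> \<longrightarrow> (\<exists>x\<in>S. cluster_point opn \<F> x))"

definition prod_module :: "'i set \<Rightarrow> ('i \<Rightarrow> ('w, 'e) L0module) \<Rightarrow> ('w, 'i \<Rightarrow> 'e) L0module" where
  "prod_module I E = \<lparr> mcarr = (\<Pi>\<^sub>E i\<in>I. mcarr (E i)),
      madd = (\<lambda>x y. restrict (\<lambda>i. madd (E i) (x i) (y i)) I),
      mzero = restrict (\<lambda>i. mzero (E i)) I,
      msmul = (\<lambda>f x. restrict (\<lambda>i. msmul (E i) f (x i)) I) \<rparr>"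

definition prod_base :: "'w measure \<Rightarrow> 'i set \<Rightarrow> ('i \<Rightarrow> ('w, 'e) L0module) \<Rightarrow> ('i \<Rightarrow> 'e set)
    \<Rightarrow> ('i \<Rightarrow> 'e set set) \<Rightarrow> ('i \<Rightarrow> 'e) set set" where
  "prod_base M I E S B = {concat_sets M (prod_module I E) A (\<lambda>k. \<Pi>\<^sub>E i\<in>I. U k i) | A U.
      meas_partition M A \<and>
      (\<forall>k. finite {i\<in>I. U k i \<noteq> S i} \<and> (\<forall>i\<in>I. U k i \<in> B i \<or> U k i = S i))}"

definition prod_open :: "'w measure \<Rightarrow> 'i set \<Rightarrow> ('i \<Rightarrow> ('w, 'e) L0module) \<Rightarrow> ('i \<Rightarrow> 'e set)
    \<Rightarrow> ('i \<Rightarrow> 'e set set) \<Rightarrow> ('i \<Rightarrow> 'e) set \<Rightarrow> bool" where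
  "prod_open M I E S B U \<longleftrightarrow> (\<exists>\<U>\<subseteq>prod_base M I E S B. \<Union>\<U> = U)"

end

theory Submission
  imports Defs
begin

definition good :: "'w measure \<Rightarrow> ('w,'e) L0module \<Rightarrow> bool" where
 "good M E \<longleftrightarrow> (\<forall>f\<in>borel_measurable M. \<forall>x\<in>mcarr E. msmul E f x \<in> mcarr E) \<and>
   (\<forall>f\<in>borel_measurable M. \<forall>g\<in>borel_measurable M. \<forall>x\<in>mcarr E.
        msmul E (\<lambda>w. f w * g w) x = msmul E f (msmul E g x)) \<and>
   (\<forall>A x. meas_partition M A \<and> (\<forall>k. x k \<in> mcarr E) \<longrightarrow>
        (\<exists>!y. y \<in> mcarr E \<and> (\<forall>k. msmul E (indicator (A k)) y = msmul E (indicator (A k)) (x k))))"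

lemma good_stable: "stable_module M E \<Longrightarrow> good M E"
  unfolding stable_module_def L0_module_def good_def by (intro conjI; elim conjE; assumption)

lemma part_sets: "meas_partition M A \<Longrightarrow> A k \<in> sets M"
  unfolding meas_partition_def by auto

lemma part_meas: "meas_partition M A \<Longrightarrow> indicator (A k) \<in> borel_measurable M"
  using part_sets by (auto intro: borel_measurable_indicator)

lemma smul_carr: "good M E \<Longrightarrow> X \<in> sets M \<Longrightarrow> x \<in> mcarr E \<Longrightarrow> msmul E (indicator X) x \<in> mcarr E"
  unfolding good_def by (auto intro: borel_measurable_indicator)

lemma concat_prop:
  assumes "good M E" "meas_partition M A" "\<forall>k. x k \<in> mcarr E"
  shows "concat M E A x \<in> mcarr E"
    "msmul E (indicator (A k)) (concat M E A x) = msmul E (indicator (A k)) (x k)"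
proof -
  have u: "\<exists>!y. y \<in> mcarr E \<and> (\<forall>k. msmul E (indicator (A k)) y = msmul E (indicator (A k)) (x k))"
    using assms unfolding good_def by blast
  have "concat M E A x \<in> mcarr E \<and> (\<forall>k. msmul E (indicator (A k)) (concat M E A x) = msmul E (indicator (A k)) (x k))"
    unfolding concat_def by (rule theI'[OF u])
  then show "concat M E A x \<in> mcarr E"
    "msmul E (indicator (A k)) (concat M E A x) = msmul E (indicator (A k)) (x k)" by auto
qed

lemma concat_eq:
  assumes "good M E" "meas_partition M A" "\<forall>k. x k \<in> mcarr E" "y \<in> mcarr E"
    "\<And>k. msmul E (indicator (A k)) y = msmul E (indicator (A k)) (x k)"
  shows "concat M E A x = y"
proof -
  have u: "\<exists>!y. y \<in> mcarr E \<and> (\<forall>k. msmul E (indicator (A k)) y = msmul E (indicator (A k)) (x k))"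
    using assms unfolding good_def by blast
  show ?thesis unfolding concat_def by (rule the1_equality[OF u]) (use assms in auto)
qed

lemma eq_local:
  assumes "good M E" "meas_partition M A" "u \<in> mcarr E" "v \<in> mcarr E"
    "\<And>k. msmul E (indicator (A k)) u = msmul E (indicator (A k)) v"
  shows "u = v"
proof -
  have "concat M E A (\<lambda>k. v) = u" by (rule concat_eq) (use assms in auto)
  moreover have "concat M E A (\<lambda>k. v) = v" by (rule concat_eq) (use assms in auto)
  ultimately show ?thesis by simp
qed

lemma ind_mult:
  assumes "good M E" "X \<in> sets M" "Y \<in> sets M" "x \<in> mcarr E"
  shows "msmul E (indicator X) (msmul E (indicator Y) x) = msmul E (indicator (X \<inter> Y)) x"
proof -
  have "msmul E (\<lambda>w. indicator X w * indicator Y w) x = msmul E (indicator X) (msmul E (indicator Y) x)"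
    using assms unfolding good_def by (auto intro: borel_measurable_indicator)
  moreover have "(\<lambda>w. indicator X w * indicator Y w :: real) = indicator (X \<inter> Y)"
    by (auto simp: indicator_def)
  ultimately show ?thesis by simp
qed

lemma ind_comm:
  assumes "good M E" "X \<in> sets M" "Y \<in> sets M" "x \<in> mcarr E"
  shows "msmul E (indicator X) (msmul E (indicator Y) x) = msmul E (indicator Y) (msmul E (indicator X) x)"
  using ind_mult[OF assms] ind_mult[OF assms(1,3,2,4)] by (simp add: Int_commute)

lemma concat_const:
  assumes "good M E" "meas_partition M A" "y \<in> mcarr E"
  shows "concat M E A (\<lambda>k. y) = y"
  by (rule concat_eq) (use assms in auto)

lemma interchange:
  assumes g: "good M E" and A: "meas_partition M A" and B: "meas_partition M B"
    and y: "\<And>j k. y j k \<in> mcarr E"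
  shows "concat M E B (\<lambda>j. concat M E A (y j)) = concat M E A (\<lambda>k. concat M E B (\<lambda>j. y j k))"
proof -
  have cA: "\<And>j. concat M E A (y j) \<in> mcarr E" using concat_prop(1)[OF g A] y by auto
  have cB: "\<And>k. concat M E B (\<lambda>j. y j k) \<in> mcarr E" using concat_prop(1)[OF g B] y by auto
  show ?thesis
  proof (rule sym, rule concat_eq[OF g A])
    show "\<forall>k. concat M E B (\<lambda>j. y j k) \<in> mcarr E" using cB by auto
    show L: "concat M E B (\<lambda>j. concat M E A (y j)) \<in> mcarr E" using concat_prop(1)[OF g B] cA by auto
    fix k
    show "msmul E (indicator (A k)) (concat M E B (\<lambda>j. concat M E A (y j))) =
          msmul E (indicator (A k)) (concat M E B (\<lambda>j. y j k))"
    proof (rule eq_local[OF g B])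
      show "msmul E (indicator (A k)) (concat M E B (\<lambda>j. concat M E A (y j))) \<in> mcarr E"
        using smul_carr[OF g part_sets[OF A] L] .
      show "msmul E (indicator (A k)) (concat M E B (\<lambda>j. y j k)) \<in> mcarr E"
        using smul_carr[OF g part_sets[OF A] cB] .
      fix j
      have "msmul E (indicator (B j)) (msmul E (indicator (A k)) (concat M E B (\<lambda>j. concat M E A (y j))))
         = msmul E (indicator (A k)) (msmul E (indicator (B j)) (concat M E B (\<lambda>j. concat M E A (y j))))"
        using ind_comm[OF g part_sets[OF B] part_sets[OF A] L] .
      also have "\<dots> = msmul E (indicator (A k)) (msmul E (indicator (B j)) (concat M E A (y j)))"
        using concat_prop(2)[OF g B] cA by auto
      also have "\<dots> = msmul E (indicator (B j)) (msmul E (indicator (A k)) (concat M E A (y j)))"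
        using ind_comm[OF g part_sets[OF A] part_sets[OF B] cA] .
      also have "\<dots> = msmul E (indicator (B j)) (msmul E (indicator (A k)) (y j k))"
        using concat_prop(2)[OF g A] y by auto
      also have "\<dots> = msmul E (indicator (A k)) (msmul E (indicator (B j)) (y j k))"
        using ind_comm[OF g part_sets[OF B] part_sets[OF A] y] .
      also have "\<dots> = msmul E (indicator (A k)) (msmul E (indicator (B j)) (concat M E B (\<lambda>j. y j k)))"
        using concat_prop(2)[OF g B, of "\<lambda>j. y j k"] y by auto
      also have "\<dots> = msmul E (indicator (B j)) (msmul E (indicator (A k)) (concat M E B (\<lambda>j. y j k)))"
        using ind_comm[OF g part_sets[OF A] part_sets[OF B] cB] .
      finally show "msmul E (indicator (B j)) (msmul E (indicator (A k)) (concat M E B (\<lambda>j. concat M E A (y j)))) =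
         msmul E (indicator (B j)) (msmul E (indicator (A k)) (concat M E B (\<lambda>j. y j k)))" .
    qed
  qed
qed


definition part2 :: "'w measure \<Rightarrow> 'w set \<Rightarrow> nat \<Rightarrow> 'w set" where
  "part2 M X = (\<lambda>n. if n = 0 then X else if n = 1 then space M - X else {})"

lemma part2_part: "X \<in> sets M \<Longrightarrow> meas_partition M (part2 M X)"
  unfolding meas_partition_def part2_def disjoint_family_on_def
  using sets.sets_into_space by (auto split: if_splits)

definition refp :: "(nat \<Rightarrow> 'w set) \<Rightarrow> (nat \<Rightarrow> nat \<Rightarrow> 'w set) \<Rightarrow> nat \<Rightarrow> 'w set" where
  "refp A A' n = A (fst (prod_decode n)) \<inter> A' (fst (prod_decode n)) (snd (prod_decode n))"

lemma refp_part:
  assumes A: "meas_partition M A" and A': "\<And>k. meas_partition M (A' k)"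
  shows "meas_partition M (refp A A')"
  unfolding meas_partition_def
proof (intro conjI allI)
  fix n show "refp A A' n \<in> sets M" unfolding refp_def using part_sets[OF A] part_sets[OF A'] by auto
next
  show "disjoint_family (refp A A')"
    unfolding disjoint_family_on_def
  proof (intro ballI impI)
    fix m n :: nat assume "m \<noteq> n"
    then have ne: "prod_decode m \<noteq> prod_decode n" by (metis prod_decode_inverse)
    show "refp A A' m \<inter> refp A A' n = {}"
    proof (cases "fst (prod_decode m) = fst (prod_decode n)")
      case True
      then have "snd (prod_decode m) \<noteq> snd (prod_decode n)" using ne by (simp add: prod_eq_iff)
      then show ?thesis using True A'[of "fst (prod_decode n)"]
        unfolding refp_def meas_partition_def disjoint_family_on_def by auto
    next
      case False
      then show ?thesis using A unfolding refp_def meas_partition_def disjoint_family_on_def by auto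
    qed
  qed
next
  show "(\<Union>n. refp A A' n) = space M"
  proof
    show "(\<Union>n. refp A A' n) \<subseteq> space M" unfolding refp_def using part_sets[OF A] sets.sets_into_space by blast
    show "space M \<subseteq> (\<Union>n. refp A A' n)"
    proof
      fix w assume w: "w \<in> space M"
      then obtain k where k: "w \<in> A k" using A unfolding meas_partition_def by auto
      then obtain k' where k': "w \<in> A' k k'" using w A'[of k] unfolding meas_partition_def by auto
      have "w \<in> refp A A' (prod_encode (k, k'))" unfolding refp_def using k k' by simp
      then show "w \<in> (\<Union>n. refp A A' n)" by blast
    qed
  qed
qed

lemma refine:
  assumes g: "good M E" and A: "meas_partition M A" and A': "\<And>k. meas_partition M (A' k)"
    and z: "\<And>n. z n \<in> mcarr E"
  shows "concat M E (refp A A') z = concat M E A (\<lambda>k. concat M E (A' k) (\<lambda>k'. z (prod_encode (k, k'))))"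
proof (rule concat_eq[OF g refp_part[OF A A']])
  have cy: "\<And>k. concat M E (A' k) (\<lambda>k'. z (prod_encode (k, k'))) \<in> mcarr E"
    using concat_prop(1)[OF g A'] z by auto
  show "\<forall>n. z n \<in> mcarr E" using z by auto
  show c: "concat M E A (\<lambda>k. concat M E (A' k) (\<lambda>k'. z (prod_encode (k, k')))) \<in> mcarr E"
    using concat_prop(1)[OF g A] cy by auto
  fix n
  obtain k k' where n: "prod_decode n = (k, k')" by (cases "prod_decode n") auto
  then have nn: "n = prod_encode (k, k')" by (metis prod_decode_inverse)
  have R: "refp A A' n = A' k k' \<inter> A k" unfolding refp_def n by auto
  have "msmul E (indicator (refp A A' n)) (concat M E A (\<lambda>k. concat M E (A' k) (\<lambda>k'. z (prod_encode (k, k')))))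
     = msmul E (indicator (A' k k')) (msmul E (indicator (A k)) (concat M E A (\<lambda>k. concat M E (A' k) (\<lambda>k'. z (prod_encode (k, k'))))))"
    unfolding R using ind_mult[OF g part_sets[OF A'] part_sets[OF A] c] by simp
  also have "\<dots> = msmul E (indicator (A' k k')) (msmul E (indicator (A k)) (concat M E (A' k) (\<lambda>k'. z (prod_encode (k, k')))))"
    using concat_prop(2)[OF g A] cy by auto
  also have "\<dots> = msmul E (indicator (A k)) (msmul E (indicator (A' k k')) (concat M E (A' k) (\<lambda>k'. z (prod_encode (k, k')))))"
    using ind_comm[OF g part_sets[OF A'] part_sets[OF A] cy] .
  also have "\<dots> = msmul E (indicator (A k)) (msmul E (indicator (A' k k')) (z n))"
    using concat_prop(2)[OF g A'[of k], where x="\<lambda>k'. z (prod_encode (k, k'))" and k=k'] z nn by auto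
  also have "\<dots> = msmul E (indicator (refp A A' n)) (z n)"
    unfolding R using ind_mult[OF g part_sets[OF A] part_sets[OF A'] z] by (simp add: Int_commute)
  finally show "msmul E (indicator (refp A A' n)) (concat M E A (\<lambda>k. concat M E (A' k) (\<lambda>k'. z (prod_encode (k, k'))))) =
      msmul E (indicator (refp A A' n)) (z n)" .
qed

lemma refine2:
  assumes g: "good M E" and A: "meas_partition M A" and A': "meas_partition M A'"
    and z: "\<And>n. z n \<in> mcarr E"
  shows "concat M E (refp A (\<lambda>_. A')) z = concat M E A' (\<lambda>k'. concat M E A (\<lambda>k. z (prod_encode (k, k'))))"
proof (rule concat_eq[OF g refp_part[OF A A']])
  have cy: "\<And>k'. concat M E A (\<lambda>k. z (prod_encode (k, k'))) \<in> mcarr E"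
    using concat_prop(1)[OF g A] z by auto
  show "\<forall>n. z n \<in> mcarr E" using z by auto
  show c: "concat M E A' (\<lambda>k'. concat M E A (\<lambda>k. z (prod_encode (k, k')))) \<in> mcarr E"
    using concat_prop(1)[OF g A'] cy by auto
  fix n
  obtain k k' where n: "prod_decode n = (k, k')" by (cases "prod_decode n") auto
  then have nn: "n = prod_encode (k, k')" by (metis prod_decode_inverse)
  have R: "refp A (\<lambda>_. A') n = A k \<inter> A' k'" unfolding refp_def n by auto
  have "msmul E (indicator (refp A (\<lambda>_. A') n)) (concat M E A' (\<lambda>k'. concat M E A (\<lambda>k. z (prod_encode (k, k')))))
     = msmul E (indicator (A k)) (msmul E (indicator (A' k')) (concat M E A' (\<lambda>k'. concat M E A (\<lambda>k. z (prod_encode (k, k'))))))"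
    unfolding R using ind_mult[OF g part_sets[OF A] part_sets[OF A'] c] by simp
  also have "\<dots> = msmul E (indicator (A k)) (msmul E (indicator (A' k')) (concat M E A (\<lambda>k. z (prod_encode (k, k')))))"
    using concat_prop(2)[OF g A'] cy by auto
  also have "\<dots> = msmul E (indicator (A' k')) (msmul E (indicator (A k)) (concat M E A (\<lambda>k. z (prod_encode (k, k')))))"
    using ind_comm[OF g part_sets[OF A] part_sets[OF A'] cy] .
  also have "\<dots> = msmul E (indicator (A' k')) (msmul E (indicator (A k)) (z n))"
    using concat_prop(2)[OF g A, where x="\<lambda>k. z (prod_encode (k, k'))" and k=k] z nn by auto
  also have "\<dots> = msmul E (indicator (refp A (\<lambda>_. A') n)) (z n)"
    unfolding R using ind_mult[OF g part_sets[OF A'] part_sets[OF A] z] by (simp add: Int_commute)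
  finally show "msmul E (indicator (refp A (\<lambda>_. A') n)) (concat M E A' (\<lambda>k'. concat M E A (\<lambda>k. z (prod_encode (k, k'))))) =
      msmul E (indicator (refp A (\<lambda>_. A') n)) (z n)" .
qed


lemma concat_setsI: "(\<And>k. y k \<in> Y k) \<Longrightarrow> concat M E A y \<in> concat_sets M E A Y"
  unfolding concat_sets_def by blast
lemma concat_setsE: "x \<in> concat_sets M E A Y \<Longrightarrow> (\<And>y. x = concat M E A y \<Longrightarrow> (\<And>k. y k \<in> Y k) \<Longrightarrow> P) \<Longrightarrow> P"
  unfolding concat_sets_def by blast

lemma stable_carr: "stable_set M E X \<Longrightarrow> X \<subseteq> mcarr E"
  unfolding stable_set_def by simp
lemma stable_ne: "stable_set M E X \<Longrightarrow> X \<noteq> {}"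
  unfolding stable_set_def by simp
lemma stable_concat: "stable_set M E Y \<Longrightarrow> meas_partition M A \<Longrightarrow> (\<And>k. y k \<in> Y) \<Longrightarrow> concat M E A y \<in> Y"
  unfolding stable_set_def by simp
lemma stable_setI: "X \<noteq> {} \<Longrightarrow> X \<subseteq> mcarr E \<Longrightarrow> (\<And>A x. meas_partition M A \<Longrightarrow> (\<And>k. x k \<in> X) \<Longrightarrow> concat M E A x \<in> X)
   \<Longrightarrow> stable_set M E X"
  unfolding stable_set_def by simp

lemma stable_Int: "stable_set M E X \<Longrightarrow> stable_set M E Y \<Longrightarrow> X \<inter> Y \<noteq> {} \<Longrightarrow> stable_set M E (X \<inter> Y)"
  by (rule stable_setI) (auto dest: stable_carr intro: stable_concat)

lemma concat_sets_mono: "(\<And>k. Y k \<subseteq> Z k) \<Longrightarrow> concat_sets M E A Y \<subseteq> concat_sets M E A Z"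
  by (auto elim!: concat_setsE intro!: concat_setsI)

lemma concat_sets_const:
  assumes g: "good M E" and A: "meas_partition M A" and Y: "stable_set M E Y"
  shows "concat_sets M E A (\<lambda>k. Y) = Y"
proof
  show "concat_sets M E A (\<lambda>k. Y) \<subseteq> Y" using stable_concat[OF Y A] by (auto elim!: concat_setsE)
  show "Y \<subseteq> concat_sets M E A (\<lambda>k. Y)"
  proof
    fix y assume y: "y \<in> Y"
    then have "y \<in> mcarr E" using stable_carr[OF Y] by blast
    then have "concat M E A (\<lambda>k. y) = y" using concat_const[OF g A] by blast
    moreover have "concat M E A (\<lambda>k. y) \<in> concat_sets M E A (\<lambda>k. Y)" by (rule concat_setsI) (rule y)
    ultimately show "y \<in> concat_sets M E A (\<lambda>k. Y)" by simp
  qed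
qed

lemma concat_sets_sub:
  assumes "stable_set M E S" "meas_partition M A" "\<And>k. Y k \<subseteq> S"
  shows "concat_sets M E A Y \<subseteq> S"
  using stable_concat[OF assms(1,2)] assms(3) by (auto elim!: concat_setsE)

lemma concat_sets_stable:
  assumes g: "good M E" and A: "meas_partition M A" and Y: "\<And>k. stable_set M E (Y k)"
  shows "stable_set M E (concat_sets M E A Y)"
proof (rule stable_setI)
  have carr: "\<And>k. Y k \<subseteq> mcarr E" using Y stable_carr by blast
  have "\<And>k. (SOME y. y \<in> Y k) \<in> Y k" using stable_ne[OF Y] by (simp add: some_in_eq)
  then have "concat M E A (\<lambda>k. SOME y. y \<in> Y k) \<in> concat_sets M E A Y" by (rule concat_setsI)
  then show "concat_sets M E A Y \<noteq> {}" by blast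
  show "concat_sets M E A Y \<subseteq> mcarr E"
  proof
    fix w assume "w \<in> concat_sets M E A Y"
    then obtain y where "w = concat M E A y" "\<And>k. y k \<in> Y k" by (elim concat_setsE) blast
    then show "w \<in> mcarr E" using concat_prop(1)[OF g A, of y] carr by blast
  qed
  fix B x assume B: "meas_partition M B" and Bx: "\<And>k::nat. x k \<in> concat_sets M E A Y"
  have "\<forall>j. \<exists>yy. x j = concat M E A yy \<and> (\<forall>k. yy k \<in> Y k)"
  proof
    fix j show "\<exists>yy. x j = concat M E A yy \<and> (\<forall>k. yy k \<in> Y k)"
      using Bx[of j] by (rule concat_setsE) blast
  qed
  then obtain yy where "\<forall>j. x j = concat M E A (yy j) \<and> (\<forall>k. yy j k \<in> Y k)"
    by (rule choice[THEN exE]) blast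
  then have yy: "\<And>j. x j = concat M E A (yy j)" "\<And>j k. yy j k \<in> Y k" by blast+
  have yc: "\<And>j k. yy j k \<in> mcarr E" using yy(2) carr by blast
  have "x = (\<lambda>j. concat M E A (yy j))" using yy(1) by (rule ext)
  then have "concat M E B x = concat M E A (\<lambda>k. concat M E B (\<lambda>j. yy j k))"
    using interchange[OF g A B yc] by simp
  moreover have "\<And>k. concat M E B (\<lambda>j. yy j k) \<in> Y k" by (rule stable_concat[OF Y B]) (rule yy(2))
  ultimately show "concat M E B x \<in> concat_sets M E A Y" by (simp add: concat_setsI)
qed

lemma concat_sets_refine:
  assumes g: "good M E" and A: "meas_partition M A" and A': "\<And>k. meas_partition M (A' k)"
    and Y: "\<And>k k'. Y k k' \<subseteq> mcarr E"
  shows "concat_sets M E (refp A A') (\<lambda>n. Y (fst (prod_decode n)) (snd (prod_decode n)))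
     \<subseteq> concat_sets M E A (\<lambda>k. concat_sets M E (A' k) (Y k))"
proof
  fix w assume "w \<in> concat_sets M E (refp A A') (\<lambda>n. Y (fst (prod_decode n)) (snd (prod_decode n)))"
  then obtain z where w: "w = concat M E (refp A A') z" and z: "\<And>n. z n \<in> Y (fst (prod_decode n)) (snd (prod_decode n))"
    by (elim concat_setsE) blast
  have zc: "\<And>n. z n \<in> mcarr E" using z Y by blast
  have "w = concat M E A (\<lambda>k. concat M E (A' k) (\<lambda>k'. z (prod_encode (k, k'))))"
    using w refine[OF g A A' zc] by simp
  moreover have "\<And>k. concat M E (A' k) (\<lambda>k'. z (prod_encode (k, k'))) \<in> concat_sets M E (A' k) (Y k)"
  proof -
    fix k
    have "\<forall>k'. z (prod_encode (k, k')) \<in> Y k k'" using z[of "prod_encode (k, k')" for k'] by simp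
    then show "concat M E (A' k) (\<lambda>k'. z (prod_encode (k, k'))) \<in> concat_sets M E (A' k) (Y k)"
      by (simp add: concat_setsI)
  qed
  ultimately show "w \<in> concat_sets M E A (\<lambda>k. concat_sets M E (A' k) (Y k))"
    by (simp add: concat_setsI)
qed

lemma concat_sets_Int:
  assumes g: "good M E" and A: "meas_partition M A" and A': "meas_partition M A'"
    and Y: "\<And>k. stable_set M E (Y k)" and Y': "\<And>k. stable_set M E (Y' k)"
  shows "concat_sets M E (refp A (\<lambda>_. A')) (\<lambda>n. Y (fst (prod_decode n)) \<inter> Y' (snd (prod_decode n)))
     \<subseteq> concat_sets M E A Y \<inter> concat_sets M E A' Y'"
proof
  fix w assume "w \<in> concat_sets M E (refp A (\<lambda>_. A')) (\<lambda>n. Y (fst (prod_decode n)) \<inter> Y' (snd (prod_decode n)))"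
  then obtain z where w: "w = concat M E (refp A (\<lambda>_. A')) z"
    and z: "\<And>n. z n \<in> Y (fst (prod_decode n)) \<inter> Y' (snd (prod_decode n))"
    by (elim concat_setsE) blast
  have zc: "\<And>n. z n \<in> mcarr E" using z Y stable_carr by blast
  have z1: "\<And>k k'. z (prod_encode (k, k')) \<in> Y k" and z2: "\<And>k k'. z (prod_encode (k, k')) \<in> Y' k'"
    using z[of "prod_encode (k, k')" for k k'] by simp_all
  have "w = concat M E A (\<lambda>k. concat M E A' (\<lambda>k'. z (prod_encode (k, k'))))"
    using w refine[OF g A A' zc] by simp
  moreover have "\<And>k. concat M E A' (\<lambda>k'. z (prod_encode (k, k'))) \<in> Y k"
    by (rule stable_concat[OF Y A']) (rule z1)
  moreover have "w = concat M E A' (\<lambda>k'. concat M E A (\<lambda>k. z (prod_encode (k, k'))))"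
    using w refine2[OF g A A' zc] by simp
  moreover have "\<And>k'. concat M E A (\<lambda>k. z (prod_encode (k, k'))) \<in> Y' k'"
    by (rule stable_concat[OF Y' A]) (rule z2)
  ultimately show "w \<in> concat_sets M E A Y \<inter> concat_sets M E A' Y'"
    by (metis IntI concat_setsI)
qed

lemma filter_onD:
  assumes "filter_on S G"
  shows "G \<noteq> {}" "{} \<notin> G" "\<And>F. F \<in> G \<Longrightarrow> F \<subseteq> S"
    "\<And>F F'. F \<in> G \<Longrightarrow> F' \<in> G \<Longrightarrow> F \<inter> F' \<in> G"
    "\<And>F F'. F \<in> G \<Longrightarrow> F \<subseteq> F' \<Longrightarrow> F' \<subseteq> S \<Longrightarrow> F' \<in> G"
  using assms unfolding filter_on_def by blast+

lemma filter_onI: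
  assumes "G \<noteq> {}" "{} \<notin> G" "\<And>F. F \<in> G \<Longrightarrow> F \<subseteq> S"
    "\<And>F F'. F \<in> G \<Longrightarrow> F' \<in> G \<Longrightarrow> F \<inter> F' \<in> G"
    "\<And>F F'. F \<in> G \<Longrightarrow> F \<subseteq> F' \<Longrightarrow> F' \<subseteq> S \<Longrightarrow> F' \<in> G"
  shows "filter_on S G"
  using assms unfolding filter_on_def by blast

lemma stable_collectionI:
  assumes "C \<noteq> {}" "\<And>Y. Y \<in> C \<Longrightarrow> stable_set M E Y"
    "\<And>A Y. meas_partition M A \<Longrightarrow> (\<And>k. Y k \<in> C) \<Longrightarrow> concat_sets M E A Y \<in> C"
  shows "stable_collection M E C"
  unfolding stable_collection_def using assms by simp

lemma stable_collectionD:
  assumes "stable_collection M E C"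
  shows "C \<noteq> {}" "\<And>Y. Y \<in> C \<Longrightarrow> stable_set M E Y"
    "\<And>A Y. meas_partition M A \<Longrightarrow> (\<And>k. Y k \<in> C) \<Longrightarrow> concat_sets M E A Y \<in> C"
  using assms unfolding stable_collection_def by simp_all

lemma stable_filterD:
  assumes "stable_filter M E S G"
  shows "filter_on S G" "\<exists>BB. BB \<subseteq> G \<and> (\<forall>F\<in>G. \<exists>B\<in>BB. B \<subseteq> F) \<and> stable_collection M E BB"
  using assms unfolding stable_filter_def by simp_all

lemma SF:
  assumes g: "good M E" and F: "filter_on S G"
    and H: "\<And>X. X \<in> G \<Longrightarrow> \<exists>H\<in>G. H \<subseteq> X \<and> stable_set M E H"
    and C: "\<And>A Y. meas_partition M A \<Longrightarrow> (\<And>k. Y k \<in> G \<and> stable_set M E (Y k)) \<Longrightarrow> concat_sets M E A Y \<in> G"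
  shows "stable_filter M E S G"
proof -
  let ?B = "{H\<in>G. stable_set M E H}"
  obtain X where "X \<in> G" using filter_onD(1)[OF F] by blast
  then have ne: "?B \<noteq> {}" using H by blast
  have sc: "stable_collection M E ?B"
  proof (rule stable_collectionI)
    show "?B \<noteq> {}" by fact
    show "\<And>Y. Y \<in> ?B \<Longrightarrow> stable_set M E Y" by blast
    fix A and Y :: "nat \<Rightarrow> _" assume A: "meas_partition M A" and Y: "\<And>k. Y k \<in> ?B"
    have "concat_sets M E A Y \<in> G" using C[OF A] Y by blast
    moreover have "stable_set M E (concat_sets M E A Y)" using concat_sets_stable[OF g A] Y by blast
    ultimately show "concat_sets M E A Y \<in> ?B" by blast
  qed
  have "\<forall>F\<in>G. \<exists>B\<in>?B. B \<subseteq> F" using H by blast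
  then show ?thesis unfolding stable_filter_def
    apply (intro conjI)
     apply (rule F)
    apply (rule exI[of _ ?B])
    using sc by blast
qed

lemma SFconv1:
  assumes "stable_filter M E S G" "X \<in> G"
  shows "\<exists>H\<in>G. H \<subseteq> X \<and> stable_set M E H"
proof -
  obtain BB where BB: "BB \<subseteq> G" "\<forall>F\<in>G. \<exists>B\<in>BB. B \<subseteq> F" "stable_collection M E BB"
    using stable_filterD(2)[OF assms(1)] by blast
  then obtain H where H: "H \<in> BB" "H \<subseteq> X" using assms(2) by blast
  have "H \<in> G" using BB(1) H(1) by blast
  moreover have "stable_set M E H" using stable_collectionD(2)[OF BB(3) H(1)] .
  ultimately show ?thesis using H(2) by blast
qed

lemma SFconv2:
  assumes F: "stable_filter M E S G" and S: "stable_set M E S" and A: "meas_partition M A"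
    and Y: "\<And>k. Y k \<in> G"
  shows "concat_sets M E A Y \<in> G"
proof -
  obtain BB where BB: "BB \<subseteq> G" "\<forall>F\<in>G. \<exists>B\<in>BB. B \<subseteq> F" "stable_collection M E BB"
    using stable_filterD(2)[OF F] by blast
  have "\<forall>k. \<exists>b. b \<in> BB \<and> b \<subseteq> Y k" using BB(2) Y by blast
  then obtain b where "\<forall>k. b k \<in> BB \<and> b k \<subseteq> Y k" by (rule choice[THEN exE]) blast
  then have b: "\<And>k. b k \<in> BB" "\<And>k. b k \<subseteq> Y k" by blast+
  have "concat_sets M E A b \<in> BB" using stable_collectionD(3)[OF BB(3) A] b(1) by blast
  then have "concat_sets M E A b \<in> G" using BB(1) by blast
  moreover have "concat_sets M E A b \<subseteq> concat_sets M E A Y" using concat_sets_mono b(2) by metis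
  moreover have "concat_sets M E A Y \<subseteq> S"
    using concat_sets_sub[OF S A] Y filter_onD(3)[OF stable_filterD(1)[OF F]] by blast
  ultimately show ?thesis using filter_onD(5)[OF stable_filterD(1)[OF F]] by blast
qed

lemma pm_carr[simp]: "mcarr (prod_module I E) = (\<Pi>\<^sub>E i\<in>I. mcarr (E i))"
  unfolding prod_module_def by simp
lemma pm_smul[simp]: "msmul (prod_module I E) f x = restrict (\<lambda>i. msmul (E i) f (x i)) I"
  unfolding prod_module_def by simp

lemma concat_prod_char:
  assumes g: "\<And>i. i \<in> I \<Longrightarrow> good M (E i)" and A: "meas_partition M A"
    and x: "\<And>k. x k \<in> (\<Pi>\<^sub>E i\<in>I. mcarr (E i))"
  shows "restrict (\<lambda>i. concat M (E i) A (\<lambda>k. x k i)) I \<in> (\<Pi>\<^sub>E i\<in>I. mcarr (E i))"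
    "\<And>k. restrict (\<lambda>i. msmul (E i) (indicator (A k)) (restrict (\<lambda>i. concat M (E i) A (\<lambda>k. x k i)) I i)) I
       = restrict (\<lambda>i. msmul (E i) (indicator (A k)) (x k i)) I"
    "\<And>y. y \<in> (\<Pi>\<^sub>E i\<in>I. mcarr (E i)) \<Longrightarrow> (\<And>k. restrict (\<lambda>i. msmul (E i) (indicator (A k)) (y i)) I
       = restrict (\<lambda>i. msmul (E i) (indicator (A k)) (x k i)) I) \<Longrightarrow> y = restrict (\<lambda>i. concat M (E i) A (\<lambda>k. x k i)) I"
proof -
  have xi: "\<And>i k. i \<in> I \<Longrightarrow> x k i \<in> mcarr (E i)" using x by (auto simp: PiE_iff)
  show "restrict (\<lambda>i. concat M (E i) A (\<lambda>k. x k i)) I \<in> (\<Pi>\<^sub>E i\<in>I. mcarr (E i))"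
    using concat_prop(1)[OF g A] xi by auto
  show "\<And>k. restrict (\<lambda>i. msmul (E i) (indicator (A k)) (restrict (\<lambda>i. concat M (E i) A (\<lambda>k. x k i)) I i)) I
       = restrict (\<lambda>i. msmul (E i) (indicator (A k)) (x k i)) I"
    using concat_prop(2)[OF g A] xi by (intro restrict_ext) auto
  fix y assume y: "y \<in> (\<Pi>\<^sub>E i\<in>I. mcarr (E i))" and
    e: "\<And>k. restrict (\<lambda>i. msmul (E i) (indicator (A k)) (y i)) I
       = restrict (\<lambda>i. msmul (E i) (indicator (A k)) (x k i)) I"
  show "y = restrict (\<lambda>i. concat M (E i) A (\<lambda>k. x k i)) I"
  proof (rule PiE_ext[OF y])
    show "restrict (\<lambda>i. concat M (E i) A (\<lambda>k. x k i)) I \<in> (\<Pi>\<^sub>E i\<in>I. mcarr (E i))"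
      using concat_prop(1)[OF g A] xi by auto
    fix i assume i: "i \<in> I"
    have "\<And>k. msmul (E i) (indicator (A k)) (y i) = msmul (E i) (indicator (A k)) (x k i)"
      using fun_cong[OF e, of _ i] i by simp
    then have "concat M (E i) A (\<lambda>k. x k i) = y i"
      using concat_eq[OF g[OF i] A] xi[OF i] y i by (auto simp: PiE_iff)
    then show "y i = restrict (\<lambda>i. concat M (E i) A (\<lambda>k. x k i)) I i" using i by simp
  qed
qed

lemma good_prod:
  assumes g: "\<And>i. i \<in> I \<Longrightarrow> good M (E i)"
  shows "good M (prod_module I E)"
  unfolding good_def
proof (intro conjI ballI allI impI)
  fix f :: "_ \<Rightarrow> real" and x assume f: "f \<in> borel_measurable M" and x: "x \<in> mcarr (prod_module I E)"
  show "msmul (prod_module I E) f x \<in> mcarr (prod_module I E)"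
    using x g f unfolding good_def by (auto simp: PiE_iff)
next
  fix f g' :: "_ \<Rightarrow> real" and x assume f: "f \<in> borel_measurable M" and g': "g' \<in> borel_measurable M" and x: "x \<in> mcarr (prod_module I E)"
  show "msmul (prod_module I E) (\<lambda>w. f w * g' w) x = msmul (prod_module I E) f (msmul (prod_module I E) g' x)"
    using x g f g' unfolding good_def by (auto simp: PiE_iff intro!: restrict_ext)
next
  fix A and x :: "nat \<Rightarrow> _" assume a: "meas_partition M A \<and> (\<forall>k. x k \<in> mcarr (prod_module I E))"
  then have A: "meas_partition M A" and x: "\<And>k. x k \<in> (\<Pi>\<^sub>E i\<in>I. mcarr (E i))" by auto
  note c = concat_prod_char[OF g A x]
  show "\<exists>!y. y \<in> mcarr (prod_module I E) \<and>
             (\<forall>k. msmul (prod_module I E) (indicator (A k)) y = msmul (prod_module I E) (indicator (A k)) (x k))"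
    apply (rule ex1I[of _ "restrict (\<lambda>i. concat M (E i) A (\<lambda>k. x k i)) I"])
    using c by auto
qed

lemma concat_prod:
  assumes g: "\<And>i. i \<in> I \<Longrightarrow> good M (E i)" and A: "meas_partition M A"
    and x: "\<And>k. x k \<in> (\<Pi>\<^sub>E i\<in>I. mcarr (E i))"
  shows "concat M (prod_module I E) A x = restrict (\<lambda>i. concat M (E i) A (\<lambda>k. x k i)) I"
  using concat_eq[OF good_prod[OF g] A, where x=x] concat_prod_char[OF g A x] x by auto

lemma concat_prod_coord:
  assumes g: "\<And>i. i \<in> I \<Longrightarrow> good M (E i)" and A: "meas_partition M A"
    and x: "\<And>k. x k \<in> (\<Pi>\<^sub>E i\<in>I. mcarr (E i))" and i: "i \<in> I"
  shows "concat M (prod_module I E) A x i = concat M (E i) A (\<lambda>k. x k i)"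
  using concat_prod[OF g A x] i by simp

lemma box_stable:
  assumes g: "\<And>i. i \<in> I \<Longrightarrow> good M (E i)" and U: "\<And>i. i \<in> I \<Longrightarrow> stable_set M (E i) (U i)"
  shows "stable_set M (prod_module I E) (\<Pi>\<^sub>E i\<in>I. U i)"
proof (rule stable_setI)
  have Uc: "\<And>i. i \<in> I \<Longrightarrow> U i \<subseteq> mcarr (E i)" using U stable_carr by blast
  show "(\<Pi>\<^sub>E i\<in>I. U i) \<noteq> {}" using U stable_ne by (auto simp: PiE_eq_empty_iff)
  show "(\<Pi>\<^sub>E i\<in>I. U i) \<subseteq> mcarr (prod_module I E)" using Uc by (force simp: PiE_iff)
  fix A x assume A: "meas_partition M A" and x: "\<And>k::nat. x k \<in> (\<Pi>\<^sub>E i\<in>I. U i)"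
  have x': "\<And>k. x k \<in> (\<Pi>\<^sub>E i\<in>I. mcarr (E i))" using x Uc by (force simp: PiE_iff)
  have "\<And>i. i \<in> I \<Longrightarrow> concat M (E i) A (\<lambda>k. x k i) \<in> U i"
  proof -
    fix i assume i: "i \<in> I"
    show "concat M (E i) A (\<lambda>k. x k i) \<in> U i"
      by (rule stable_concat[OF U[OF i] A]) (use x i in \<open>auto simp: PiE_iff\<close>)
  qed
  then show "concat M (prod_module I E) A x \<in> (\<Pi>\<^sub>E i\<in>I. U i)"
    by (subst concat_prod[OF g A x']) auto
qed

lemma part2_0[simp]: "part2 M X 0 = X" unfolding part2_def by simp

lemma locality:
  assumes g: "good M E" and A: "meas_partition M A" and V: "stable_set M E V"
    and H: "\<And>k. stable_set M E (H k)" and ne: "\<And>k. V \<inter> H k \<noteq> {}"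
  shows "V \<inter> concat_sets M E A H \<subseteq> concat_sets M E A (\<lambda>k. V \<inter> H k)"
proof
  fix x assume "x \<in> V \<inter> concat_sets M E A H"
  then have xV: "x \<in> V" and "x \<in> concat_sets M E A H" by auto
  then obtain h where xh: "x = concat M E A h" and h: "\<And>k. h k \<in> H k" by (elim concat_setsE) blast
  have "\<forall>k. \<exists>v. v \<in> V \<inter> H k" using ne by blast
  then obtain v where v: "\<And>k. v k \<in> V \<inter> H k" by metis
  have Hc: "\<And>k. H k \<subseteq> mcarr E" using H stable_carr by blast
  have Vc: "V \<subseteq> mcarr E" using V stable_carr by blast
  have hc: "\<And>k. h k \<in> mcarr E" using h Hc by blast
  have vc: "\<And>k. v k \<in> mcarr E" using v Vc by blast
  have xc: "x \<in> mcarr E" using xV Vc by blast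
  define gg where "gg k = concat M E (part2 M (A k)) (\<lambda>n. if n = 0 then h k else v k)" for k
  have P: "\<And>k. meas_partition M (part2 M (A k))" using part2_part part_sets[OF A] by blast
  have sq: "\<And>k. \<forall>n. (if n = 0 then h k else v k) \<in> mcarr E" using hc vc by simp
  have ggc: "\<And>k. gg k \<in> mcarr E" unfolding gg_def using concat_prop(1)[OF g P sq] .
  have gg0: "\<And>k. msmul E (indicator (A k)) (gg k) = msmul E (indicator (A k)) (h k)"
    unfolding gg_def using concat_prop(2)[OF g P sq, where k=0] by simp
  have xA: "\<And>k. msmul E (indicator (A k)) x = msmul E (indicator (A k)) (h k)"
    unfolding xh using concat_prop(2)[OF g A] hc by blast
  have ggH: "\<And>k. gg k \<in> H k"
    unfolding gg_def by (rule stable_concat[OF H P]) (use h v in auto)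
  have ggV: "gg k \<in> V" for k
  proof -
    have sq2: "\<forall>n. (if n = 0 then x else v k) \<in> mcarr E" using xc vc by simp
    have "concat M E (part2 M (A k)) (\<lambda>n. if n = 0 then x else v k) = gg k"
    proof (rule concat_eq[OF g P sq2 ggc])
      fix n
      show "msmul E (indicator (part2 M (A k) n)) (gg k) =
            msmul E (indicator (part2 M (A k) n)) (if n = 0 then x else v k)"
      proof (cases "n = 0")
        case True then show ?thesis using gg0 xA by simp
      next
        case False then show ?thesis
          unfolding gg_def using concat_prop(2)[OF g P sq, where k=n] by simp
      qed
    qed
    moreover have "concat M E (part2 M (A k)) (\<lambda>n. if n = 0 then x else v k) \<in> V"
      by (rule stable_concat[OF V P]) (use xV v in auto)
    ultimately show ?thesis by simp
  qed
  have "concat M E A gg = x"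
    by (rule concat_eq[OF g A]) (use ggc xc gg0 xA in auto)
  moreover have "concat M E A gg \<in> concat_sets M E A (\<lambda>k. V \<inter> H k)"
    by (rule concat_setsI) (use ggV ggH in blast)
  ultimately show "x \<in> concat_sets M E A (\<lambda>k. V \<inter> H k)" by simp
qed


lemma triv_part: "meas_partition M (part2 M (space M))"
  by (rule part2_part) simp

lemma chain_ub:
  assumes g: "good M E" and S: "stable_set M E S" and C: "C \<noteq> {}"
    and F: "\<And>X. X \<in> C \<Longrightarrow> stable_filter M E S X" and ch: "\<And>X X'. X \<in> C \<Longrightarrow> X' \<in> C \<Longrightarrow> X \<subseteq> X' \<or> X' \<subseteq> X"
  shows "\<exists>U. stable_filter M E S U \<and> (\<forall>X\<in>C. X \<subseteq> U)"
proof -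
  define SC where "SC = {H. \<exists>X\<in>C. H \<in> X \<and> stable_set M E H}"
  define G where "G = {Gs. Gs \<subseteq> S \<and> (\<exists>A Y. meas_partition M A \<and> (\<forall>k. Y k \<in> SC) \<and> concat_sets M E A Y \<subseteq> Gs)}"
  have SCs: "\<And>H. H \<in> SC \<Longrightarrow> stable_set M E H" unfolding SC_def by blast
  have SCc: "\<And>H. H \<in> SC \<Longrightarrow> H \<subseteq> mcarr E" using SCs stable_carr by blast
  have GI: "Gs \<in> G" if "Gs \<subseteq> S" "meas_partition M A" "\<And>k. Y k \<in> SC" "concat_sets M E A Y \<subseteq> Gs" for Gs A Y
    unfolding G_def using that by blast
  have GE: "\<exists>A Y. meas_partition M A \<and> (\<forall>k. Y k \<in> SC) \<and> concat_sets M E A Y \<subseteq> Gs" "Gs \<subseteq> S"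
    if "Gs \<in> G" for Gs using that unfolding G_def by blast+
  have sub: "X \<subseteq> G" if X: "X \<in> C" for X
  proof
    fix Gs assume Gs: "Gs \<in> X"
    obtain H where H: "H \<in> X" "H \<subseteq> Gs" "stable_set M E H" using SFconv1[OF F[OF X] Gs] by blast
    have HS: "H \<in> SC" unfolding SC_def using H X by blast
    have "concat_sets M E (part2 M (space M)) (\<lambda>k. H) = H" using concat_sets_const[OF g triv_part H(3)] .
    moreover have "Gs \<subseteq> S" using filter_onD(3)[OF stable_filterD(1)[OF F[OF X]] Gs] .
    ultimately show "Gs \<in> G" using GI[OF _ triv_part, of Gs "\<lambda>k. H"] HS H(2) by simp
  qed
  have cs_stable: "stable_set M E (concat_sets M E A Y)" if "meas_partition M A" "\<And>k. Y k \<in> SC" for A Y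
    using concat_sets_stable[OF g that(1)] SCs that(2) by blast
  have filt: "filter_on S G"
  proof (rule filter_onI)
    obtain X where X: "X \<in> C" using C by blast
    obtain Z where "Z \<in> X" using filter_onD(1)[OF stable_filterD(1)[OF F[OF X]]] by blast
    then have "Z \<in> G" using sub[OF X] by blast
    then show "G \<noteq> {}" by blast
    show "{} \<notin> G"
    proof
      assume "{} \<in> G"
      then obtain A Y where "meas_partition M A" "\<And>k. Y k \<in> SC" "concat_sets M E A Y \<subseteq> {}"
        using GE(1) by blast
      then show False using stable_ne[OF cs_stable] by blast
    qed
    show "\<And>F. F \<in> G \<Longrightarrow> F \<subseteq> S" using GE(2) by blast
    show "\<And>F F'. F \<in> G \<Longrightarrow> F \<subseteq> F' \<Longrightarrow> F' \<subseteq> S \<Longrightarrow> F' \<in> G"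
    proof -
      fix F F' assume F1: "F \<in> G" and F2: "F \<subseteq> F'" and F3: "F' \<subseteq> S"
      obtain A Y where A: "meas_partition M A" and Y: "\<And>k. Y k \<in> SC" and AY: "concat_sets M E A Y \<subseteq> F"
        using GE(1)[OF F1] by blast
      show "F' \<in> G" by (rule GI[where Y=Y, OF F3 A Y]) (use AY F2 in blast)
    qed
    fix F F' assume F1: "F \<in> G" and F2: "F' \<in> G"
    obtain A Y where A: "meas_partition M A" and Y: "\<And>k. Y k \<in> SC" and AY: "concat_sets M E A Y \<subseteq> F"
      using GE(1)[OF F1] by blast
    obtain A' Y' where A': "meas_partition M A'" and Y': "\<And>k. Y' k \<in> SC" and AY': "concat_sets M E A' Y' \<subseteq> F'"
      using GE(1)[OF F2] by blast
    have Z: "Y (fst (prod_decode n)) \<inter> Y' (snd (prod_decode n)) \<in> SC" for n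
    proof -
      obtain X1 where X1: "X1 \<in> C" "Y (fst (prod_decode n)) \<in> X1" "stable_set M E (Y (fst (prod_decode n)))"
        using Y unfolding SC_def by blast
      obtain X2 where X2: "X2 \<in> C" "Y' (snd (prod_decode n)) \<in> X2" "stable_set M E (Y' (snd (prod_decode n)))"
        using Y' unfolding SC_def by blast
      have "\<exists>X\<in>C. Y (fst (prod_decode n)) \<in> X \<and> Y' (snd (prod_decode n)) \<in> X"
        using ch[OF X1(1) X2(1)] X1 X2 by blast
      then obtain X where X: "X \<in> C" "Y (fst (prod_decode n)) \<in> X" "Y' (snd (prod_decode n)) \<in> X" by blast
      have fX: "filter_on S X" using stable_filterD(1)[OF F[OF X(1)]] .
      have I: "Y (fst (prod_decode n)) \<inter> Y' (snd (prod_decode n)) \<in> X" using filter_onD(4)[OF fX X(2,3)] .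
      then have "Y (fst (prod_decode n)) \<inter> Y' (snd (prod_decode n)) \<noteq> {}" using filter_onD(2)[OF fX] by auto
      then have "stable_set M E (Y (fst (prod_decode n)) \<inter> Y' (snd (prod_decode n)))"
        using stable_Int X1(3) X2(3) by blast
      then show ?thesis unfolding SC_def using I X(1) by blast
    qed
    have FS: "F \<inter> F' \<subseteq> S" using GE(2)[OF F1] by blast
    have "concat_sets M E (refp A (\<lambda>_. A')) (\<lambda>n. Y (fst (prod_decode n)) \<inter> Y' (snd (prod_decode n)))
       \<subseteq> concat_sets M E A Y \<inter> concat_sets M E A' Y'"
      by (rule concat_sets_Int[OF g A A']) (use SCs Y Y' in blast)+
    then have "concat_sets M E (refp A (\<lambda>_. A')) (\<lambda>n. Y (fst (prod_decode n)) \<inter> Y' (snd (prod_decode n))) \<subseteq> F \<inter> F'"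
      using AY AY' by blast
    with FS show "F \<inter> F' \<in> G"
      by (rule GI[where Y="\<lambda>n. Y (fst (prod_decode n)) \<inter> Y' (snd (prod_decode n))", OF _ refp_part[OF A A'] Z])
  qed
  have sf: "stable_filter M E S G"
  proof (rule SF[OF g filt])
    fix X assume X: "X \<in> G"
    obtain A Y where A: "meas_partition M A" and Y: "\<And>k. Y k \<in> SC" and AY: "concat_sets M E A Y \<subseteq> X"
      using GE(1)[OF X] by blast
    have "concat_sets M E A Y \<subseteq> S" using AY GE(2)[OF X] by blast
    then have "concat_sets M E A Y \<in> G" by (rule GI[where Y=Y, OF _ A Y]) simp
    moreover have "stable_set M E (concat_sets M E A Y)" by (rule cs_stable[OF A]) (rule Y)
    ultimately show "\<exists>H\<in>G. H \<subseteq> X \<and> stable_set M E H" using AY by blast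
  next
    fix B and Ys :: "nat \<Rightarrow> _" assume B: "meas_partition M B" and Ys: "\<And>k. Ys k \<in> G \<and> stable_set M E (Ys k)"
    have "\<forall>j. \<exists>A Y. meas_partition M A \<and> (\<forall>k. Y k \<in> SC) \<and> concat_sets M E A Y \<subseteq> Ys j"
      using GE(1) Ys by blast
    then obtain A where "\<forall>j. \<exists>Y. meas_partition M (A j) \<and> (\<forall>k. Y k \<in> SC) \<and> concat_sets M E (A j) Y \<subseteq> Ys j"
      by (rule choice[THEN exE]) blast
    then obtain Y where "\<forall>j. meas_partition M (A j) \<and> (\<forall>k. Y j k \<in> SC) \<and> concat_sets M E (A j) (Y j) \<subseteq> Ys j"
      by (rule choice[THEN exE]) blast
    then have A: "\<And>j. meas_partition M (A j)" and Y: "\<And>j k. Y j k \<in> SC"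
      and AYs: "\<And>j. concat_sets M E (A j) (Y j) \<subseteq> Ys j" by blast+
    have "concat_sets M E (refp B A) (\<lambda>n. Y (fst (prod_decode n)) (snd (prod_decode n)))
        \<subseteq> concat_sets M E B (\<lambda>j. concat_sets M E (A j) (Y j))"
      by (rule concat_sets_refine[OF g B A]) (use SCc Y in blast)
    also have "\<dots> \<subseteq> concat_sets M E B Ys" by (rule concat_sets_mono) (rule AYs)
    finally have 1: "concat_sets M E (refp B A) (\<lambda>n. Y (fst (prod_decode n)) (snd (prod_decode n))) \<subseteq> concat_sets M E B Ys" .
    have 2: "concat_sets M E B Ys \<subseteq> S" by (rule concat_sets_sub[OF S B]) (use Ys GE(2) in blast)
    have Z: "\<And>n. Y (fst (prod_decode n)) (snd (prod_decode n)) \<in> SC" using Y by blast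
    show "concat_sets M E B Ys \<in> G"
      by (rule GI[where Y="\<lambda>n. Y (fst (prod_decode n)) (snd (prod_decode n))", OF 2 refp_part[OF B A] Z 1])
  qed
  then show ?thesis using sub by blast
qed


lemma exists_max:
  assumes g: "good M E" and S: "stable_set M E S" and F0: "stable_filter M E S F0"
  shows "\<exists>U. stable_filter M E S U \<and> F0 \<subseteq> U \<and> (\<forall>U'. stable_filter M E S U' \<and> U \<subseteq> U' \<longrightarrow> U' = U)"
proof -
  let ?A = "{U. stable_filter M E S U \<and> F0 \<subseteq> U}"
  have "\<forall>C\<in>chains ?A. \<exists>U\<in>?A. \<forall>X\<in>C. X \<subseteq> U"
  proof
    fix C assume C: "C \<in> chains ?A"
    then have CA: "C \<subseteq> ?A" and ch: "\<And>X X'. X \<in> C \<Longrightarrow> X' \<in> C \<Longrightarrow> X \<subseteq> X' \<or> X' \<subseteq> X"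
      unfolding chains_def chain_subset_def by blast+
    show "\<exists>U\<in>?A. \<forall>X\<in>C. X \<subseteq> U"
    proof (cases "C = {}")
      case True then show ?thesis using F0 by blast
    next
      case False
      have Fs: "\<And>X. X \<in> C \<Longrightarrow> stable_filter M E S X" using CA by blast
      obtain U where U: "stable_filter M E S U" "\<forall>X\<in>C. X \<subseteq> U"
        using chain_ub[OF g S False Fs ch] by blast
      obtain X where "X \<in> C" using False by blast
      then have "F0 \<subseteq> U" using U(2) CA by blast
      then show ?thesis using U by blast
    qed
  qed
  from Zorn_Lemma2[OF this] obtain U where "U \<in> ?A" "\<forall>X\<in>?A. U \<subseteq> X \<longrightarrow> X = U" by blast
  then show ?thesis by blast
qed

lemma absorb:
  assumes g: "good M E" and S: "stable_set M E S" and U: "stable_filter M E S U"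
    and max: "\<And>U'. stable_filter M E S U' \<Longrightarrow> U \<subseteq> U' \<Longrightarrow> U' = U"
    and V: "stable_set M E V" and VS: "V \<subseteq> S" and meet: "\<And>F. F \<in> U \<Longrightarrow> V \<inter> F \<noteq> {}"
  shows "V \<in> U"
proof -
  define G where "G = {Gs. Gs \<subseteq> S \<and> (\<exists>H\<in>U. stable_set M E H \<and> V \<inter> H \<subseteq> Gs)}"
  have fU: "filter_on S U" using stable_filterD(1)[OF U] .
  have GI: "Gs \<in> G" if "Gs \<subseteq> S" "H \<in> U" "stable_set M E H" "V \<inter> H \<subseteq> Gs" for Gs H
    unfolding G_def using that by blast
  have GE: "\<exists>H\<in>U. stable_set M E H \<and> V \<inter> H \<subseteq> Gs" "Gs \<subseteq> S" if "Gs \<in> G" for Gs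
    using that unfolding G_def by blast+
  have VH: "stable_set M E (V \<inter> H)" if "H \<in> U" "stable_set M E H" for H
    using stable_Int[OF V that(2) meet[OF that(1)]] .
  have sub: "U \<subseteq> G"
  proof
    fix F assume F: "F \<in> U"
    obtain H where H: "H \<in> U" "H \<subseteq> F" "stable_set M E H" using SFconv1[OF U F] by blast
    have "F \<subseteq> S" using filter_onD(3)[OF fU F] .
    then show "F \<in> G" by (rule GI[OF _ H(1) H(3)]) (use H(2) in blast)
  qed
  have filt: "filter_on S G"
  proof (rule filter_onI)
    show "G \<noteq> {}" using sub filter_onD(1)[OF fU] by blast
    show "{} \<notin> G"
    proof
      assume "{} \<in> G"
      then obtain H where "H \<in> U" "V \<inter> H \<subseteq> {}" using GE(1) by blast
      then show False using meet by blast
    qed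
    show "\<And>F. F \<in> G \<Longrightarrow> F \<subseteq> S" using GE(2) by blast
    show "\<And>F F'. F \<in> G \<Longrightarrow> F \<subseteq> F' \<Longrightarrow> F' \<subseteq> S \<Longrightarrow> F' \<in> G"
    proof -
      fix F F' assume F1: "F \<in> G" and F2: "F \<subseteq> F'" and F3: "F' \<subseteq> S"
      obtain H where H: "H \<in> U" "stable_set M E H" "V \<inter> H \<subseteq> F" using GE(1)[OF F1] by blast
      show "F' \<in> G" by (rule GI[OF F3 H(1,2)]) (use H(3) F2 in blast)
    qed
    fix F F' assume F1: "F \<in> G" and F2: "F' \<in> G"
    obtain H where H: "H \<in> U" "stable_set M E H" "V \<inter> H \<subseteq> F" using GE(1)[OF F1] by blast
    obtain H' where H': "H' \<in> U" "stable_set M E H'" "V \<inter> H' \<subseteq> F'" using GE(1)[OF F2] by blast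
    have I: "H \<inter> H' \<in> U" using filter_onD(4)[OF fU H(1) H'(1)] .
    then have "H \<inter> H' \<noteq> {}" using filter_onD(2)[OF fU] by auto
    then have st: "stable_set M E (H \<inter> H')" using stable_Int H(2) H'(2) by blast
    have "F \<inter> F' \<subseteq> S" using GE(2)[OF F1] by blast
    then show "F \<inter> F' \<in> G" by (rule GI[OF _ I st]) (use H(3) H'(3) in blast)
  qed
  have sf: "stable_filter M E S G"
  proof (rule SF[OF g filt])
    fix X assume X: "X \<in> G"
    obtain H where H: "H \<in> U" "stable_set M E H" "V \<inter> H \<subseteq> X" using GE(1)[OF X] by blast
    have "V \<inter> H \<subseteq> S" using VS by blast
    then have "V \<inter> H \<in> G" by (rule GI[OF _ H(1,2)]) simp
    then show "\<exists>H\<in>G. H \<subseteq> X \<and> stable_set M E H" using H(3) VH[OF H(1,2)] by blast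
  next
    fix A and Ys :: "nat \<Rightarrow> _" assume A: "meas_partition M A" and Ys: "\<And>k. Ys k \<in> G \<and> stable_set M E (Ys k)"
    have "\<forall>k. \<exists>H. H \<in> U \<and> stable_set M E H \<and> V \<inter> H \<subseteq> Ys k" using GE(1) Ys by blast
    then obtain H where "\<forall>k. H k \<in> U \<and> stable_set M E (H k) \<and> V \<inter> H k \<subseteq> Ys k"
      by (rule choice[THEN exE]) blast
    then have HU: "\<And>k. H k \<in> U" and Hs: "\<And>k. stable_set M E (H k)" and HY: "\<And>k. V \<inter> H k \<subseteq> Ys k" by blast+
    have cU: "concat_sets M E A H \<in> U" by (rule SFconv2[OF U S A]) (rule HU)
    have cs: "stable_set M E (concat_sets M E A H)" by (rule concat_sets_stable[OF g A]) (rule Hs)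
    have "V \<inter> concat_sets M E A H \<subseteq> concat_sets M E A (\<lambda>k. V \<inter> H k)"
      by (rule locality[OF g A V]) (use Hs meet HU in blast)+
    also have "\<dots> \<subseteq> concat_sets M E A Ys" by (rule concat_sets_mono) (rule HY)
    finally have 1: "V \<inter> concat_sets M E A H \<subseteq> concat_sets M E A Ys" .
    have 2: "concat_sets M E A Ys \<subseteq> S" by (rule concat_sets_sub[OF S A]) (use Ys GE(2) in blast)
    show "concat_sets M E A Ys \<in> G" by (rule GI[OF 2 cU cs 1])
  qed
  have "G = U" using max[OF sf sub] .
  moreover obtain F where F: "F \<in> U" using filter_onD(1)[OF fU] by blast
  then obtain H where H: "H \<in> U" "stable_set M E H" using SFconv1[OF U F] by blast
  have "V \<in> G" by (rule GI[OF VS H(1,2)]) blast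
  ultimately show ?thesis by simp
qed

locale psetting =
  fixes M :: "'w measure" and I :: "'i set" and E :: "'i \<Rightarrow> ('w, 'e) L0module"
    and S :: "'i \<Rightarrow> 'e set" and T :: "'i \<Rightarrow> 'e topology" and B :: "'i \<Rightarrow> 'e set set"
  assumes gi: "\<And>i. i \<in> I \<Longrightarrow> good M (E i)"
    and Sst: "\<And>i. i \<in> I \<Longrightarrow> stable_set M (E i) (S i)"
    and top: "\<And>i. i \<in> I \<Longrightarrow> topspace (T i) = S i"
    and base: "\<And>i. i \<in> I \<Longrightarrow> stable_base M (E i) (T i) (B i)"
begin

abbreviation "P \<equiv> (\<Pi>\<^sub>E i\<in>I. S i)"
abbreviation "EP \<equiv> prod_module I E"

definition box :: "'i \<Rightarrow> 'e set \<Rightarrow> ('i \<Rightarrow> 'e) set" where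
  "box j V = (\<Pi>\<^sub>E i\<in>I. (if i = j then V else S i))"

lemma gP: "good M EP" using good_prod[OF gi] .
lemma PS: "stable_set M EP P" using box_stable[OF gi Sst] .
lemma Pc: "P \<subseteq> mcarr EP" using stable_carr[OF PS] .

lemma B_open: "i \<in> I \<Longrightarrow> V \<in> B i \<Longrightarrow> openin (T i) V"
  using base unfolding stable_base_def by blast
lemma B_sub: "i \<in> I \<Longrightarrow> V \<in> B i \<Longrightarrow> V \<subseteq> S i"
  using B_open top openin_subset by metis
lemma B_coll: "i \<in> I \<Longrightarrow> stable_collection M (E i) (B i)"
  using base unfolding stable_base_def by blast
lemma B_stable: "i \<in> I \<Longrightarrow> V \<in> B i \<Longrightarrow> stable_set M (E i) V"
  using stable_collectionD(2)[OF B_coll] by blast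
lemma B_basic:
  assumes i: "i \<in> I" and U: "openin (T i) U" and x: "x \<in> U"
  shows "\<exists>V\<in>B i. x \<in> V \<and> V \<subseteq> U"
proof -
  obtain \<U> where "\<U> \<subseteq> B i" "\<Union>\<U> = U" using base[OF i] U unfolding stable_base_def by blast
  then show ?thesis using x by blast
qed
lemma B_cover:
  assumes i: "i \<in> I" and x: "x \<in> S i"
  shows "\<exists>V\<in>B i. x \<in> V"
  using B_basic[OF i _ x] top[OF i] by (metis openin_topspace)

lemma box_stable': "j \<in> I \<Longrightarrow> stable_set M (E j) V \<Longrightarrow> stable_set M EP (box j V)"
  unfolding box_def by (rule box_stable[OF gi]) (use Sst in auto)

lemma box_sub: "j \<in> I \<Longrightarrow> V \<subseteq> S j \<Longrightarrow> box j V \<subseteq> P"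
  unfolding box_def by (rule PiE_mono) auto

lemma box_mem: "z \<in> box j V \<longleftrightarrow> z \<in> P \<and> (j \<in> I \<longrightarrow> z j \<in> V)" if "V \<subseteq> S j"
  using that unfolding box_def by (auto simp: PiE_iff)

lemma box_concat:
  assumes j: "j \<in> I" and A: "meas_partition M A" and F: "\<And>k. F k \<subseteq> S j"
  shows "box j (concat_sets M (E j) A F) \<subseteq> concat_sets M EP A (\<lambda>k. box j (F k))"
proof
  have cS: "concat_sets M (E j) A F \<subseteq> S j" by (rule concat_sets_sub[OF Sst[OF j] A]) (rule F)
  fix x assume "x \<in> box j (concat_sets M (E j) A F)"
  then have xP: "x \<in> P" and xj: "x j \<in> concat_sets M (E j) A F" using box_mem[OF cS] j by auto
  obtain f where xf: "x j = concat M (E j) A f" and f: "\<And>k. f k \<in> F k" using xj by (elim concat_setsE) blast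
  define z where "z k = x(j := f k)" for k
  have zb: "z k \<in> box j (F k)" for k
    unfolding box_mem[OF F] z_def using xP f[of k] F[of k] j by (auto simp: PiE_iff extensional_def)
  have zc: "z k \<in> (\<Pi>\<^sub>E i\<in>I. mcarr (E i))" for k
  proof -
    have "z k \<in> P" using box_sub[OF j F] zb by (rule subsetD)
    then show ?thesis using Pc by auto
  qed
  have xc: "\<And>i. i \<in> I \<Longrightarrow> x i \<in> mcarr (E i)" using xP Sst stable_carr by (blast dest: PiE_mem)
  have "concat M EP A z = restrict (\<lambda>i. concat M (E i) A (\<lambda>k. z k i)) I" using concat_prod[OF gi A zc] .
  also have "\<dots> = x"
  proof (rule ext)
    fix i show "restrict (\<lambda>i. concat M (E i) A (\<lambda>k. z k i)) I i = x i"
    proof (cases "i \<in> I")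
      case False then show ?thesis using xP by (auto simp: PiE_iff extensional_def)
    next
      case True
      show ?thesis
      proof (cases "i = j")
        case True then show ?thesis using j xf unfolding z_def by simp
      next
        case False then show ?thesis using \<open>i \<in> I\<close> concat_const[OF gi A xc] unfolding z_def by simp
      qed
    qed
  qed
  finally have "concat M EP A z = x" .
  moreover have "concat M EP A z \<in> concat_sets M EP A (\<lambda>k. box j (F k))" by (rule concat_setsI) (rule zb)
  ultimately show "x \<in> concat_sets M EP A (\<lambda>k. box j (F k))" by simp
qed

lemma dir1:
  assumes comp: "stable_compact M EP P (prod_open M I E S B)" and j: "j \<in> I"
  shows "stable_compact M (E j) (S j) (openin (T j))"
  unfolding stable_compact_def
proof (intro allI impI)
  fix F0 assume F0: "stable_filter M (E j) (S j) F0"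
  have fF: "filter_on (S j) F0" using stable_filterD(1)[OF F0] .
  have FS: "\<And>F. F \<in> F0 \<Longrightarrow> F \<subseteq> S j" using filter_onD(3)[OF fF] .
  define G where "G = {Gs. Gs \<subseteq> P \<and> (\<exists>F\<in>F0. box j F \<subseteq> Gs)}"
  have GI: "Gs \<in> G" if "Gs \<subseteq> P" "F \<in> F0" "box j F \<subseteq> Gs" for Gs F
    unfolding G_def using that by blast
  have GE: "\<exists>F\<in>F0. box j F \<subseteq> Gs" "Gs \<subseteq> P" if "Gs \<in> G" for Gs
    using that unfolding G_def by blast+
  have boxG: "box j F \<in> G" if "F \<in> F0" for F
    by (rule GI[OF box_sub[OF j FS[OF that]] that]) simp
  have filt: "filter_on P G"
  proof (rule filter_onI)
    obtain F where "F \<in> F0" using filter_onD(1)[OF fF] by blast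
    then show "G \<noteq> {}" using boxG by blast
    show "{} \<notin> G"
    proof
      assume "{} \<in> G"
      then obtain F where F: "F \<in> F0" "box j F \<subseteq> {}" using GE(1) by blast
      have "F \<noteq> {}" using F(1) filter_onD(2)[OF fF] by auto
      then obtain a where a: "a \<in> F" by blast
      have "\<forall>i\<in>I. \<exists>b. b \<in> S i" using Sst stable_ne by blast
      then obtain b where b: "\<And>i. i \<in> I \<Longrightarrow> b i \<in> S i" by metis
      have "(restrict b I)(j := a) \<in> box j F"
        unfolding box_mem[OF FS[OF F(1)]] using a b j FS[OF F(1)] by (auto simp: PiE_iff extensional_def)
      then show False using F(2) by blast
    qed
    show "\<And>F. F \<in> G \<Longrightarrow> F \<subseteq> P" using GE(2) by blast
    show "\<And>F F'. F \<in> G \<Longrightarrow> F \<subseteq> F' \<Longrightarrow> F' \<subseteq> P \<Longrightarrow> F' \<in> G"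
    proof -
      fix F F' assume F1: "F \<in> G" and F2: "F \<subseteq> F'" and F3: "F' \<subseteq> P"
      obtain H where H: "H \<in> F0" "box j H \<subseteq> F" using GE(1)[OF F1] by blast
      show "F' \<in> G" by (rule GI[OF F3 H(1)]) (use H(2) F2 in blast)
    qed
    fix F F' assume F1: "F \<in> G" and F2: "F' \<in> G"
    obtain H where H: "H \<in> F0" "box j H \<subseteq> F" using GE(1)[OF F1] by blast
    obtain H' where H': "H' \<in> F0" "box j H' \<subseteq> F'" using GE(1)[OF F2] by blast
    have I: "H \<inter> H' \<in> F0" using filter_onD(4)[OF fF H(1) H'(1)] .
    have "box j (H \<inter> H') \<subseteq> box j H \<inter> box j H'" unfolding box_def by (intro Int_greatest PiE_mono) auto
    moreover have "F \<inter> F' \<subseteq> P" using GE(2)[OF F1] by blast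
    ultimately show "F \<inter> F' \<in> G" using H(2) H'(2) by (intro GI[OF _ I]) blast+
  qed
  have sf: "stable_filter M EP P G"
  proof (rule SF[OF gP filt])
    fix X assume X: "X \<in> G"
    obtain F where F: "F \<in> F0" "box j F \<subseteq> X" using GE(1)[OF X] by blast
    obtain H where H: "H \<in> F0" "H \<subseteq> F" "stable_set M (E j) H" using SFconv1[OF F0 F(1)] by blast
    have "box j H \<subseteq> box j F" using H(2) unfolding box_def by (intro PiE_mono) auto
    then show "\<exists>H\<in>G. H \<subseteq> X \<and> stable_set M EP H"
      using boxG[OF H(1)] box_stable'[OF j H(3)] F(2) by blast
  next
    fix A and Ys :: "nat \<Rightarrow> _" assume A: "meas_partition M A" and Ys: "\<And>k. Ys k \<in> G \<and> stable_set M EP (Ys k)"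
    have "\<forall>k. \<exists>F. F \<in> F0 \<and> box j F \<subseteq> Ys k" using GE(1) Ys by blast
    then obtain F where "\<forall>k. F k \<in> F0 \<and> box j (F k) \<subseteq> Ys k" by (rule choice[THEN exE]) blast
    then have FF: "\<And>k. F k \<in> F0" and FY: "\<And>k. box j (F k) \<subseteq> Ys k" by blast+
    have cF: "concat_sets M (E j) A F \<in> F0" by (rule SFconv2[OF F0 Sst[OF j] A]) (rule FF)
    have "box j (concat_sets M (E j) A F) \<subseteq> concat_sets M EP A (\<lambda>k. box j (F k))"
      by (rule box_concat[OF j A]) (rule FS[OF FF])
    also have "\<dots> \<subseteq> concat_sets M EP A Ys" by (rule concat_sets_mono) (rule FY)
    finally have 1: "box j (concat_sets M (E j) A F) \<subseteq> concat_sets M EP A Ys" .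
    have 2: "concat_sets M EP A Ys \<subseteq> P" by (rule concat_sets_sub[OF PS A]) (use Ys GE(2) in blast)
    show "concat_sets M EP A Ys \<in> G" by (rule GI[OF 2 cF 1])
  qed
  obtain x where xP: "x \<in> P" and cl: "cluster_point (prod_open M I E S B) G x"
    using comp sf unfolding stable_compact_def by blast
  show "\<exists>x\<in>S j. cluster_point (openin (T j)) F0 x"
  proof (intro bexI)
    show "x j \<in> S j" using xP j by auto
    show "cluster_point (openin (T j)) F0 (x j)"
      unfolding cluster_point_def
    proof (intro allI impI ballI)
      fix U F assume U: "openin (T j) U \<and> x j \<in> U" and F: "F \<in> F0"
      obtain V where V: "V \<in> B j" "x j \<in> V" "V \<subseteq> U" using B_basic[OF j] U by blast
      have VS: "V \<subseteq> S j" using B_sub[OF j V(1)] .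
      have Vst: "stable_set M (E j) V" using B_stable[OF j V(1)] .
      have bst: "stable_set M EP (box j V)" using box_stable'[OF j Vst] .
      have "box j V = concat_sets M EP (part2 M (space M)) (\<lambda>k. box j V)"
        using concat_sets_const[OF gP triv_part bst] by simp
      also have "\<dots> = concat_sets M EP (part2 M (space M)) (\<lambda>k. \<Pi>\<^sub>E i\<in>I. (if i = j then V else S i))"
        unfolding box_def by simp
      finally have "box j V \<in> prod_base M I E S B"
        unfolding prod_base_def
      proof (intro CollectI exI conjI allI)
        show "meas_partition M (part2 M (space M))" by (rule triv_part)
        fix k
        show "finite {i \<in> I. (if i = j then V else S i) \<noteq> S i}" by (rule finite_subset[of _ "{j}"]) auto
        show "\<forall>i\<in>I. (if i = j then V else S i) \<in> B i \<or> (if i = j then V else S i) = S i" using V(1) by auto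
      qed
      then have po: "prod_open M I E S B (box j V)" unfolding prod_open_def by (intro exI[of _ "{box j V}"]) auto
      have xb: "x \<in> box j V" unfolding box_mem[OF VS] using xP V(2) by simp
      have "box j V \<inter> box j F \<noteq> {}" using cl po xb boxG[OF F] unfolding cluster_point_def by blast
      then obtain z where "z \<in> box j V" "z \<in> box j F" by blast
      then have "z j \<in> V" "z j \<in> F" using box_mem[OF VS] box_mem[OF FS[OF F]] j by auto
      then show "U \<inter> F \<noteq> {}" using V(3) by blast
    qed
  qed
qed

lemma proj_stable:
  assumes i: "i \<in> I" and H: "stable_set M EP H" and HP: "H \<subseteq> P"
  shows "stable_set M (E i) ((\<lambda>z. z i) ` H)"
proof (rule stable_setI)
  show "(\<lambda>z. z i) ` H \<noteq> {}" using stable_ne[OF H] by blast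
  have Hc: "H \<subseteq> (\<Pi>\<^sub>E i\<in>I. mcarr (E i))" using HP Pc by auto
  then show "(\<lambda>z. z i) ` H \<subseteq> mcarr (E i)" using i by (auto simp: PiE_iff)
  fix A and x :: "nat \<Rightarrow> _" assume A: "meas_partition M A" and x: "\<And>k. x k \<in> (\<lambda>z. z i) ` H"
  have "\<forall>k. \<exists>h. h \<in> H \<and> x k = h i" using x by blast
  then obtain h where "\<forall>k. h k \<in> H \<and> x k = h k i" by (rule choice[THEN exE]) blast
  then have h: "\<And>k. h k \<in> H" and xh: "\<And>k. x k = h k i" by blast+
  have hc: "\<And>k. h k \<in> (\<Pi>\<^sub>E i\<in>I. mcarr (E i))" using h Hc by blast
  have "concat M EP A h \<in> H" by (rule stable_concat[OF H A]) (rule h)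
  moreover have "concat M EP A h i = concat M (E i) A (\<lambda>k. h k i)"
    by (rule concat_prod_coord) (use gi A hc i in auto)
  moreover have "x = (\<lambda>k. h k i)" using xh by (rule ext)
  ultimately show "concat M (E i) A x \<in> (\<lambda>z. z i) ` H" by (metis image_eqI)
qed

definition projF :: "('i \<Rightarrow> 'e) set set \<Rightarrow> 'i \<Rightarrow> 'e set set" where
  "projF U i = {Gs. Gs \<subseteq> S i \<and> (\<exists>F\<in>U. (\<lambda>z. z i) ` F \<subseteq> Gs)}"

lemma proj_filter:
  assumes U: "stable_filter M EP P U" and i: "i \<in> I"
  shows "stable_filter M (E i) (S i) (projF U i)"
proof -
  have fU: "filter_on P U" using stable_filterD(1)[OF U] .
  have UP: "\<And>F. F \<in> U \<Longrightarrow> F \<subseteq> P" using filter_onD(3)[OF fU] .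
  have imS: "(\<lambda>z. z i) ` F \<subseteq> S i" if "F \<subseteq> P" for F using that i by auto
  have GI: "Gs \<in> projF U i" if "Gs \<subseteq> S i" "F \<in> U" "(\<lambda>z. z i) ` F \<subseteq> Gs" for Gs F
    unfolding projF_def using that by blast
  have GE: "\<exists>F\<in>U. (\<lambda>z. z i) ` F \<subseteq> Gs" "Gs \<subseteq> S i" if "Gs \<in> projF U i" for Gs
    using that unfolding projF_def by blast+
  have imG: "(\<lambda>z. z i) ` F \<in> projF U i" if "F \<in> U" for F
    by (rule GI[OF imS[OF UP[OF that]] that]) simp
  have filt: "filter_on (S i) (projF U i)"
  proof (rule filter_onI)
    obtain F where "F \<in> U" using filter_onD(1)[OF fU] by blast
    then show "projF U i \<noteq> {}" using imG by blast
    show "{} \<notin> projF U i"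
    proof
      assume "{} \<in> projF U i"
      then obtain F where F: "F \<in> U" "(\<lambda>z. z i) ` F \<subseteq> {}" using GE(1) by blast
      then show False using filter_onD(2)[OF fU] by auto
    qed
    show "\<And>F. F \<in> projF U i \<Longrightarrow> F \<subseteq> S i" using GE(2) by blast
    show "\<And>F F'. F \<in> projF U i \<Longrightarrow> F \<subseteq> F' \<Longrightarrow> F' \<subseteq> S i \<Longrightarrow> F' \<in> projF U i"
    proof -
      fix F F' assume F1: "F \<in> projF U i" and F2: "F \<subseteq> F'" and F3: "F' \<subseteq> S i"
      obtain H where H: "H \<in> U" "(\<lambda>z. z i) ` H \<subseteq> F" using GE(1)[OF F1] by blast
      show "F' \<in> projF U i" by (rule GI[OF F3 H(1)]) (use H(2) F2 in blast)
    qed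
    fix F F' assume F1: "F \<in> projF U i" and F2: "F' \<in> projF U i"
    obtain H where H: "H \<in> U" "(\<lambda>z. z i) ` H \<subseteq> F" using GE(1)[OF F1] by blast
    obtain H' where H': "H' \<in> U" "(\<lambda>z. z i) ` H' \<subseteq> F'" using GE(1)[OF F2] by blast
    have I: "H \<inter> H' \<in> U" using filter_onD(4)[OF fU H(1) H'(1)] .
    have "F \<inter> F' \<subseteq> S i" using GE(2)[OF F1] by blast
    moreover have "(\<lambda>z. z i) ` (H \<inter> H') \<subseteq> F \<inter> F'" using H(2) H'(2) by blast
    ultimately show "F \<inter> F' \<in> projF U i" by (rule GI[OF _ I])
  qed
  show ?thesis
  proof (rule SF[OF gi[OF i] filt])
    fix X assume X: "X \<in> projF U i"
    obtain F where F: "F \<in> U" "(\<lambda>z. z i) ` F \<subseteq> X" using GE(1)[OF X] by blast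
    obtain H where H: "H \<in> U" "H \<subseteq> F" "stable_set M EP H" using SFconv1[OF U F(1)] by blast
    have "(\<lambda>z. z i) ` H \<subseteq> X" using H(2) F(2) by blast
    then show "\<exists>H\<in>projF U i. H \<subseteq> X \<and> stable_set M (E i) H"
      using imG[OF H(1)] proj_stable[OF i H(3) UP[OF H(1)]] by blast
  next
    fix A and Ys :: "nat \<Rightarrow> _" assume A: "meas_partition M A" and Ys: "\<And>k. Ys k \<in> projF U i \<and> stable_set M (E i) (Ys k)"
    have "\<forall>k. \<exists>F. F \<in> U \<and> (\<lambda>z. z i) ` F \<subseteq> Ys k" using GE(1) Ys by blast
    then obtain F where "\<forall>k. F k \<in> U \<and> (\<lambda>z. z i) ` F k \<subseteq> Ys k" by (rule choice[THEN exE]) blast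
    then have FF: "\<And>k. F k \<in> U" and FY: "\<And>k. (\<lambda>z. z i) ` F k \<subseteq> Ys k" by blast+
    have cF: "concat_sets M EP A F \<in> U" by (rule SFconv2[OF U PS A]) (rule FF)
    have 1: "(\<lambda>z. z i) ` concat_sets M EP A F \<subseteq> concat_sets M (E i) A Ys"
    proof
      fix w assume "w \<in> (\<lambda>z. z i) ` concat_sets M EP A F"
      then obtain v where w: "w = v i" and v: "v \<in> concat_sets M EP A F" by blast
      obtain h where vh: "v = concat M EP A h" and h: "\<And>k. h k \<in> F k" using v by (elim concat_setsE) blast
      have hc: "h k \<in> (\<Pi>\<^sub>E i\<in>I. mcarr (E i))" for k
      proof -
        have "h k \<in> P" using UP[OF FF[of k]] h[of k] by (rule subsetD)
        then show ?thesis using Pc by auto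
      qed
      have "concat M EP A h i = concat M (E i) A (\<lambda>k. h k i)"
        by (rule concat_prod_coord) (use gi A hc i in auto)
      then have "w = concat M (E i) A (\<lambda>k. h k i)" using w vh by simp
      moreover have "concat M (E i) A (\<lambda>k. h k i) \<in> concat_sets M (E i) A Ys"
        by (rule concat_setsI) (use FY h in blast)
      ultimately show "w \<in> concat_sets M (E i) A Ys" by simp
    qed
    have 2: "concat_sets M (E i) A Ys \<subseteq> S i" by (rule concat_sets_sub[OF Sst[OF i] A]) (use Ys GE(2) in blast)
    show "concat_sets M (E i) A Ys \<in> projF U i" by (rule GI[OF 2 cF 1])
  qed
qed

lemma cyl_in:
  assumes U: "stable_filter M EP P U" and mx: "\<And>U'. stable_filter M EP P U' \<Longrightarrow> U \<subseteq> U' \<Longrightarrow> U' = U"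
    and i: "i \<in> I" and cl: "cluster_point (openin (T i)) (projF U i) xi"
    and V: "V \<in> B i" and xV: "xi \<in> V"
  shows "box i V \<in> U"
proof (rule absorb[OF gP PS U mx])
  have VS: "V \<subseteq> S i" using B_sub[OF i V] .
  show "stable_set M EP (box i V)" using box_stable'[OF i B_stable[OF i V]] .
  show "box i V \<subseteq> P" using box_sub[OF i VS] .
  fix F assume F: "F \<in> U"
  have FP: "F \<subseteq> P" using filter_onD(3)[OF stable_filterD(1)[OF U] F] .
  have "(\<lambda>z. z i) ` F \<in> projF U i" unfolding projF_def using F FP i by auto
  then have "V \<inter> (\<lambda>z. z i) ` F \<noteq> {}" using cl B_open[OF i V] xV unfolding cluster_point_def by blast
  then obtain z where z: "z \<in> F" "z i \<in> V" by blast
  then have "z \<in> box i V" unfolding box_mem[OF VS] using FP by blast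
  then show "box i V \<inter> F \<noteq> {}" using z by blast
qed

lemma boxes_in:
  assumes U: "stable_filter M EP P U" and mx: "\<And>U'. stable_filter M EP P U' \<Longrightarrow> U \<subseteq> U' \<Longrightarrow> U' = U"
    and cl: "\<And>i. i \<in> I \<Longrightarrow> cluster_point (openin (T i)) (projF U i) (x i)"
    and J: "finite J" "J \<subseteq> I" and Vt: "\<And>i. i \<in> J \<Longrightarrow> Vt i \<in> B i \<and> x i \<in> Vt i"
  shows "(\<Pi>\<^sub>E l\<in>I. if l \<in> J then Vt l else S l) \<in> U"
  using J Vt
proof (induction J rule: finite_induct)
  case empty
  have fU: "filter_on P U" using stable_filterD(1)[OF U] .
  obtain F where F: "F \<in> U" using filter_onD(1)[OF fU] by blast
  have "P \<in> U" using filter_onD(5)[OF fU F filter_onD(3)[OF fU F]] by simp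
  then show ?case by simp
next
  case (insert a J)
  have fU: "filter_on P U" using stable_filterD(1)[OF U] .
  have aI: "a \<in> I" using insert.prems(1) by blast
  have 1: "(\<Pi>\<^sub>E l\<in>I. if l \<in> J then Vt l else S l) \<in> U"
    by (rule insert.IH) (use insert.prems in auto)
  have Va: "Vt a \<in> B a" "x a \<in> Vt a" using insert.prems(2)[of a] by auto
  have 2: "box a (Vt a) \<in> U" by (rule cyl_in[OF U mx aI cl[OF aI] Va])
  have "(\<Pi>\<^sub>E l\<in>I. if l \<in> insert a J then Vt l else S l) = (\<Pi>\<^sub>E l\<in>I. if l \<in> J then Vt l else S l) \<inter> box a (Vt a)"
  proof -
    have VtS: "Vt i \<subseteq> S i" if "i \<in> insert a J" for i
    proof -
      have "i \<in> I" using insert.prems(1) that by blast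
      moreover have "Vt i \<in> B i" using insert.prems(2)[OF that] by blast
      ultimately show ?thesis by (rule B_sub)
    qed
    have pt: "\<And>l w. l \<in> I \<Longrightarrow> (w \<in> (if l \<in> insert a J then Vt l else S l)) \<longleftrightarrow>
       (w \<in> (if l \<in> J then Vt l else S l) \<and> w \<in> (if l = a then Vt a else S l))"
    proof -
      fix l w assume "l \<in> I"
      show "(w \<in> (if l \<in> insert a J then Vt l else S l)) \<longleftrightarrow>
       (w \<in> (if l \<in> J then Vt l else S l) \<and> w \<in> (if l = a then Vt a else S l))"
        using VtS[of l] insert.hyps(2) by (cases "l = a"; cases "l \<in> J") auto
    qed
    show ?thesis unfolding box_def
    proof (rule set_eqI)
      fix z
      have "(\<forall>l\<in>I. z l \<in> (if l \<in> insert a J then Vt l else S l)) \<longleftrightarrow>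
        (\<forall>l\<in>I. z l \<in> (if l \<in> J then Vt l else S l)) \<and> (\<forall>l\<in>I. z l \<in> (if l = a then Vt a else S l))"
        using pt by blast
      then show "z \<in> (\<Pi>\<^sub>E l\<in>I. if l \<in> insert a J then Vt l else S l) \<longleftrightarrow>
          z \<in> (\<Pi>\<^sub>E l\<in>I. if l \<in> J then Vt l else S l) \<inter> (\<Pi>\<^sub>E l\<in>I. if l = a then Vt a else S l)"
        unfolding PiE_iff Int_iff by blast
    qed
  qed
  then show ?case using filter_onD(4)[OF fU 1 2] by simp
qed

end

context psetting begin

lemma base_in:
  assumes U: "stable_filter M EP P U" and mx: "\<And>U'. stable_filter M EP P U' \<Longrightarrow> U \<subseteq> U' \<Longrightarrow> U' = U"
    and cl: "\<And>i. i \<in> I \<Longrightarrow> cluster_point (openin (T i)) (projF U i) (x i)"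
    and xP: "x \<in> P" and W: "W \<in> prod_base M I E S B" and xW: "x \<in> W"
  shows "W \<in> U"
proof -
  have fU: "filter_on P U" using stable_filterD(1)[OF U] .
  have "\<exists>A Uk. W = concat_sets M EP A (\<lambda>k. \<Pi>\<^sub>E i\<in>I. Uk k i) \<and> meas_partition M A \<and>
      (\<forall>k. finite {i\<in>I. Uk k i \<noteq> S i} \<and> (\<forall>i\<in>I. Uk k i \<in> B i \<or> Uk k i = S i))"
    using W unfolding prod_base_def by (simp only: mem_Collect_eq)
  then obtain A Uk where WA: "W = concat_sets M EP A (\<lambda>k. \<Pi>\<^sub>E i\<in>I. Uk k i)" and A: "meas_partition M A"
    and fb: "\<forall>k. finite {i\<in>I. Uk k i \<noteq> S i} \<and> (\<forall>i\<in>I. Uk k i \<in> B i \<or> Uk k i = S i)"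
    by blast
  have fin: "\<And>k. finite {i\<in>I. Uk k i \<noteq> S i}" using fb by blast
  have UB: "\<And>k i. i \<in> I \<Longrightarrow> Uk k i \<in> B i \<or> Uk k i = S i" using fb by blast
  have UkS: "Uk k i \<subseteq> S i" if "i \<in> I" for k i 
  proof (cases "Uk k i = S i")
    case False then have "Uk k i \<in> B i" using UB[OF that, of k] by blast
    then show ?thesis by (rule B_sub[OF that])
  qed simp
  have UkP: "(\<Pi>\<^sub>E i\<in>I. Uk k i) \<subseteq> P" for k by (rule PiE_mono) (rule UkS)
  have Sc: "\<And>i. i \<in> I \<Longrightarrow> S i \<subseteq> mcarr (E i)" using Sst stable_carr by blast
  have xc: "x \<in> mcarr EP" using xP Pc by blast
  have xi: "\<And>i. i \<in> I \<Longrightarrow> x i \<in> S i" using xP by auto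
  obtain y where xy: "x = concat M EP A y" and y: "\<And>k. y k \<in> (\<Pi>\<^sub>E i\<in>I. Uk k i)"
    using xW unfolding WA by (elim concat_setsE) blast
  have yc: "y k \<in> mcarr EP" for k using subsetD[OF Pc subsetD[OF UkP[of k] y[of k]]] .
  have xyA: "msmul (E i) (indicator (A k)) (x i) = msmul (E i) (indicator (A k)) (y k i)" if i: "i \<in> I" for i k
  proof -
    have "msmul EP (indicator (A k)) x = msmul EP (indicator (A k)) (y k)"
      unfolding xy by (rule concat_prop(2)[OF gP A]) (use yc in blast)
    then have "restrict (\<lambda>i. msmul (E i) (indicator (A k)) (x i)) I i = restrict (\<lambda>i. msmul (E i) (indicator (A k)) (y k i)) I i"
      unfolding pm_smul by (rule arg_cong)
    then show ?thesis using i by simp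
  qed
  define Vx where "Vx i = (SOME V. V \<in> B i \<and> x i \<in> V)" for i
  have Vx: "Vx i \<in> B i" "x i \<in> Vx i" if "i \<in> I" for i
  proof -
    have "\<exists>V. V \<in> B i \<and> x i \<in> V" using B_cover[OF that xi[OF that]] by blast
    then have "Vx i \<in> B i \<and> x i \<in> Vx i" unfolding Vx_def by (rule someI_ex)
    then show "Vx i \<in> B i" "x i \<in> Vx i" by auto
  qed
  define J where "J k = {i\<in>I. Uk k i \<noteq> S i}" for k
  define Ut where "Ut k i = concat_sets M (E i) (part2 M (A k)) (\<lambda>n. if n = 0 then Uk k i else Vx i)" for k i
  have P2: "\<And>k. meas_partition M (part2 M (A k))" using part2_part part_sets[OF A] by blast
  have UtB: "Ut k i \<in> B i \<and> x i \<in> Ut k i" if "i \<in> J k" for k i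
  proof -
    have i: "i \<in> I" and UkB: "Uk k i \<in> B i" using that UB unfolding J_def by auto
    have mem: "\<And>n. (if n = 0 then Uk k i else Vx i) \<in> B i" using UkB Vx(1)[OF i] by simp
    have "Ut k i \<in> B i" unfolding Ut_def
      by (rule stable_collectionD(3)[OF B_coll[OF i] P2]) (rule mem)
    moreover have "x i \<in> Ut k i"
    proof -
      have sq: "\<forall>n. (if n = 0 then y k i else x i) \<in> mcarr (E i)"
      proof
        fix n
        have "y k i \<in> mcarr (E i)" using subsetD[OF Sc[OF i] subsetD[OF UkS[OF i, of k] PiE_mem[OF y[of k] i]]] .
        moreover have "x i \<in> mcarr (E i)" using subsetD[OF Sc[OF i] xi[OF i]] .
        ultimately show "(if n = 0 then y k i else x i) \<in> mcarr (E i)" by simp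
      qed
      have "concat M (E i) (part2 M (A k)) (\<lambda>n. if n = 0 then y k i else x i) = x i"
      proof (rule concat_eq[OF gi[OF i] P2 sq])
        show "x i \<in> mcarr (E i)" using xi[OF i] Sc[OF i] by blast
        fix n show "msmul (E i) (indicator (part2 M (A k) n)) (x i) =
             msmul (E i) (indicator (part2 M (A k) n)) (if n = 0 then y k i else x i)"
          using xyA[OF i, of k] by (cases "n = 0") auto
      qed
      moreover have "concat M (E i) (part2 M (A k)) (\<lambda>n. if n = 0 then y k i else x i) \<in> Ut k i"
        unfolding Ut_def by (rule concat_setsI) (use y[of k] i Vx(2)[OF i] in auto)
      ultimately show ?thesis by simp
    qed
    ultimately show ?thesis by blast
  qed
  define Wk where "Wk k = (\<Pi>\<^sub>E l\<in>I. if l \<in> J k then Ut k l else S l)" for k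
  have WkU: "Wk k \<in> U" for k
  proof -
    have f: "finite (J k)" unfolding J_def by (rule fin)
    have s: "J k \<subseteq> I" unfolding J_def by blast
    show ?thesis unfolding Wk_def by (rule boxes_in[where Vt="Ut k", OF U mx cl f s UtB])
  qed
  have cW: "concat_sets M EP A Wk \<in> U" by (rule SFconv2[OF U PS A]) (rule WkU)
  have sub: "concat_sets M EP A Wk \<subseteq> W"
  proof
    fix w assume "w \<in> concat_sets M EP A Wk"
    then obtain h where wh: "w = concat M EP A h" and h: "\<And>k. h k \<in> Wk k" by (elim concat_setsE) blast
    have hP: "h k \<in> P" for k
    proof -
      have "Wk k \<subseteq> P" unfolding Wk_def
      proof (rule PiE_mono)
        fix l assume l: "l \<in> I"
        show "(if l \<in> J k then Ut k l else S l) \<subseteq> S l"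
        proof (cases "l \<in> J k")
          case True then show ?thesis using UtB[OF True] B_sub[OF l] by simp
        qed simp
      qed
      then show ?thesis using h[of k] by (rule subsetD)
    qed
    have hc: "h k \<in> mcarr EP" for k using subsetD[OF Pc hP[of k]] .
    have ex: "\<exists>c. c \<in> Uk k i \<and> msmul (E i) (indicator (A k)) c = msmul (E i) (indicator (A k)) (h k i)"
      if i: "i \<in> I" for k i
    proof (cases "i \<in> J k")
      case True
      have "h k i \<in> (if i \<in> J k then Ut k i else S i)" by (rule PiE_mem[OF h[of k, unfolded Wk_def] i])
      then have "h k i \<in> Ut k i" using True by simp
      then obtain u where hu: "h k i = concat M (E i) (part2 M (A k)) u"
        and u: "\<And>n. u n \<in> (if n = 0 then Uk k i else Vx i)"
        unfolding Ut_def by (elim concat_setsE) blast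
      have uc: "\<forall>n. u n \<in> mcarr (E i)"
      proof
        fix n show "u n \<in> mcarr (E i)"
        proof (cases "n = 0")
          case True then have "u n \<in> Uk k i" using u[of n] by simp
          then show ?thesis using UkS[OF i, of k] Sc[OF i] by blast
        next
          case False then have "u n \<in> Vx i" using u[of n] by simp
          then show ?thesis using B_sub[OF i Vx(1)[OF i]] Sc[OF i] by blast
        qed
      qed
      have "msmul (E i) (indicator (A k)) (h k i) = msmul (E i) (indicator (A k)) (u 0)"
        unfolding hu using concat_prop(2)[OF gi[OF i] P2[of k] uc, where k=0] by simp
      moreover have "u 0 \<in> Uk k i" using u[of 0] by simp
      ultimately show ?thesis by metis
    next
      case False
      then have "Uk k i = S i" using i unfolding J_def by auto
      moreover have "h k i \<in> S i" using hP[of k] i by auto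
      ultimately show ?thesis by blast
    qed
    define cc where "cc k i = (SOME c. c \<in> Uk k i \<and> msmul (E i) (indicator (A k)) c = msmul (E i) (indicator (A k)) (h k i))" for k i
    have cc: "cc k i \<in> Uk k i" "msmul (E i) (indicator (A k)) (cc k i) = msmul (E i) (indicator (A k)) (h k i)"
      if "i \<in> I" for k i
    proof -
      have "cc k i \<in> Uk k i \<and> msmul (E i) (indicator (A k)) (cc k i) = msmul (E i) (indicator (A k)) (h k i)"
        unfolding cc_def by (rule someI_ex) (rule ex[OF that])
      then show "cc k i \<in> Uk k i" "msmul (E i) (indicator (A k)) (cc k i) = msmul (E i) (indicator (A k)) (h k i)" by auto
    qed
    define z where "z k = restrict (cc k) I" for k
    have zU: "z k \<in> (\<Pi>\<^sub>E i\<in>I. Uk k i)" for k unfolding z_def using cc(1) by auto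
    have zc: "z k \<in> mcarr EP" for k using subsetD[OF Pc subsetD[OF UkP[of k] zU[of k]]] .
    have "concat M EP A z = w"
    proof (rule concat_eq[OF gP A])
      show "\<forall>k. z k \<in> mcarr EP" using zc by blast
      show "w \<in> mcarr EP" unfolding wh by (rule concat_prop(1)[OF gP A]) (use hc in blast)
      fix k
      have "msmul EP (indicator (A k)) w = msmul EP (indicator (A k)) (h k)"
        unfolding wh by (rule concat_prop(2)[OF gP A]) (use hc in blast)
      also have "\<dots> = msmul EP (indicator (A k)) (z k)"
        unfolding pm_smul z_def by (rule restrict_ext) (use cc(2) in simp)
      finally show "msmul EP (indicator (A k)) w = msmul EP (indicator (A k)) (z k)" .
    qed
    moreover have "concat M EP A z \<in> W" unfolding WA by (rule concat_setsI) (rule zU)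
    ultimately show "w \<in> W" by simp
  qed
  have WP: "W \<subseteq> P" unfolding WA by (rule concat_sets_sub[OF PS A]) (rule UkP)
  show ?thesis using filter_onD(5)[OF fU cW sub WP] .
qed

lemma dir2:
  assumes comp: "\<And>i. i \<in> I \<Longrightarrow> stable_compact M (E i) (S i) (openin (T i))"
  shows "stable_compact M EP P (prod_open M I E S B)"
  unfolding stable_compact_def
proof (intro allI impI)
  fix F0 assume F0: "stable_filter M EP P F0"
  obtain U where U: "stable_filter M EP P U" and FU: "F0 \<subseteq> U"
    and mx0: "\<forall>U'. stable_filter M EP P U' \<and> U \<subseteq> U' \<longrightarrow> U' = U"
    using exists_max[OF gP PS F0] by blast
  have mx: "\<And>U'. stable_filter M EP P U' \<Longrightarrow> U \<subseteq> U' \<Longrightarrow> U' = U" using mx0 by blast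
  have fU: "filter_on P U" using stable_filterD(1)[OF U] .
  have ex: "\<exists>xi. xi \<in> S i \<and> cluster_point (openin (T i)) (projF U i) xi" if i: "i \<in> I" for i
  proof -
    have "stable_filter M (E i) (S i) (projF U i)" using proj_filter[OF U i] .
    then show ?thesis using comp[OF i] unfolding stable_compact_def by blast
  qed
  define x where "x = restrict (\<lambda>i. SOME xi. xi \<in> S i \<and> cluster_point (openin (T i)) (projF U i) xi) I"
  have xx: "x i \<in> S i \<and> cluster_point (openin (T i)) (projF U i) (x i)" if i: "i \<in> I" for i
    unfolding x_def using someI_ex[OF ex[OF i]] i by simp
  have cl: "\<And>i. i \<in> I \<Longrightarrow> cluster_point (openin (T i)) (projF U i) (x i)" using xx by blast
  have xP: "x \<in> P" unfolding PiE_iff using xx by (simp add: x_def)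
  show "\<exists>x\<in>P. cluster_point (prod_open M I E S B) F0 x"
  proof (rule bexI[OF _ xP])
    show "cluster_point (prod_open M I E S B) F0 x"
      unfolding cluster_point_def
    proof (intro allI impI ballI)
      fix Wo F assume Wo: "prod_open M I E S B Wo \<and> x \<in> Wo" and F: "F \<in> F0"
      obtain \<W> where W: "\<W> \<subseteq> prod_base M I E S B" "\<Union>\<W> = Wo" using Wo unfolding prod_open_def by blast
      then obtain W0 where W0: "W0 \<in> \<W>" "x \<in> W0" using Wo by blast
      have "W0 \<in> U" by (rule base_in[OF U mx cl xP]) (use W W0 in blast)+
      moreover have "F \<in> U" using FU F by blast
      ultimately have "W0 \<inter> F \<in> U" by (rule filter_onD(4)[OF fU])
      then have "W0 \<inter> F \<noteq> {}" using filter_onD(2)[OF fU] by auto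
      moreover have "W0 \<subseteq> Wo" using W W0 by blast
      ultimately show "Wo \<inter> F \<noteq> {}" by blast
    qed
  qed
qed

end

theorem mainTheorem9:
  fixes M :: "'w measure" and I :: "'i set" and E :: "'i \<Rightarrow> ('w, 'e) L0module"
    and S :: "'i \<Rightarrow> 'e set" and T :: "'i \<Rightarrow> 'e topology" and B :: "'i \<Rightarrow> 'e set set"
  assumes "prob_space M"
    and "I \<noteq> {}"
    and "\<forall>i\<in>I. stable_module M (E i)"
    and "\<forall>i\<in>I. stable_top_space M (E i) (S i) (T i)"
    and "\<forall>i\<in>I. stable_base M (E i) (T i) (B i)"
  shows "stable_compact M (prod_module I E) (\<Pi>\<^sub>E i\<in>I. S i) (prod_open M I E S B)
     \<longleftrightarrow> (\<forall>i\<in>I. stable_compact M (E i) (S i) (openin (T i)))"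
proof -
  interpret psetting M I E S T B
  proof
    fix i assume i: "i \<in> I"
    show "good M (E i)" using good_stable assms(3) i by blast
    show "stable_set M (E i) (S i)" using assms(4) i unfolding stable_top_space_def by blast
    show "topspace (T i) = S i" using assms(4) i unfolding stable_top_space_def by blast
    show "stable_base M (E i) (T i) (B i)" using assms(5) i by blast
  qed
  show ?thesis using dir1 dir2 by blast
qed

end
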